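(* Let $\mathcal{U} = \mathbb{T}^p\times B^q$ with coordinates $(\theta_1\bmod 1,\dots,\theta_p\bmod1, r_1,\dots,r_q)$, $B^q$ a ball in $\mathbb{R}^q$, and let $Z = \sum_{i=1}^p a_i(r_1,\dots,r_q)\partial_{\theta_i}$ with smooth functions $a_i$. Assume $a_1,\dots,a_p$ are incommensurable: there is no nonzero $(k_1,\dots,k_p)\in\mathbb{Z}^p$ such that $\sum_i k_i a_i(r) = 0$ on an open subset. Let $\Lambda$ be a linear differential operator on $\mathcal{U}$ with $Z\circ\Lambda - \Lambda\circ Z = 0$. Then $\Lambda$ is invariant under the natural free $\mathbb{T}^p$-action on $\mathcal{U}$ by translations in $\theta$; equivalently, when written as $\Lambda = \sum_{I,J} C_{I,J}(\theta,r)\,\partial_\theta^I\partial_r^J$, all coefficients $C_{I,J}$ are independent of $\theta$.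
   Context: Multi-index notation: $\partial_\theta^I = \partial_{\theta_1}^{i_1}\cdots\partial_{\theta_p}^{i_p}$ for $I=(i_1,\dots,i_p)$, similarly $\partial_r^J$. *)

theory Defs
  imports "HOL-Analysis.Analysis"
begin

definition dirderiv :: "'a::real_normed_vector \<Rightarrow> ('a \<Rightarrow> real) \<Rightarrow> 'a \<Rightarrow> real" where
  "dirderiv v g x = deriv (\<lambda>t. g (x + t *\<^sub>R v)) 0"

fun iterdir :: "'a::real_normed_vector list \<Rightarrow> ('a \<Rightarrow> real) \<Rightarrow> 'a \<Rightarrow> real" where
  "iterdir [] g = g"
| "iterdir (v # vs) g = dirderiv v (iterdir vs g)"

definition smooth_on :: "'a::euclidean_space set \<Rightarrow> ('a \<Rightarrow> real) \<Rightarrow> bool" where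
  "smooth_on S g \<longleftrightarrow> (\<forall>ds. iterdir ds g differentiable_on S)"

text \<open>Points of T^p x B^q are represented as (theta, r) with theta in R^p; functions on the torus
  are the functions 1-periodic in every theta-coordinate.\<close>
definition theta_periodic :: "((real, 'p::finite) vec \<times> (real, 'q::finite) vec \<Rightarrow> real) \<Rightarrow> bool" where
  "theta_periodic g \<longleftrightarrow> (\<forall>i \<theta> r. g (\<theta> + axis i 1, r) = g (\<theta>, r))"

definition theta_dirs :: "('p::{finite,linorder} \<Rightarrow> nat) \<Rightarrow> ((real, 'p) vec \<times> (real, 'q::finite) vec) list" where
  "theta_dirs I = concat (map (\<lambda>i. replicate (I i) (axis i 1, 0)) (sorted_list_of_set UNIV))"

definition r_dirs :: "('q::{finite,linorder} \<Rightarrow> nat) \<Rightarrow> ((real, 'p::finite) vec \<times> (real, 'q) vec) list" where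
  "r_dirs J = concat (map (\<lambda>j. replicate (J j) (0, axis j 1)) (sorted_list_of_set UNIV))"

definition partial_IJ ::
  "('p::{finite,linorder} \<Rightarrow> nat) \<Rightarrow> ('q::{finite,linorder} \<Rightarrow> nat)
    \<Rightarrow> ((real, 'p) vec \<times> (real, 'q) vec \<Rightarrow> real) \<Rightarrow> (real, 'p) vec \<times> (real, 'q) vec \<Rightarrow> real" where
  "partial_IJ I J g = iterdir (theta_dirs I @ r_dirs J) g"

definition Zop :: "('p::finite \<Rightarrow> (real, 'q::finite) vec \<Rightarrow> real) \<Rightarrow> ((real, 'p) vec \<times> (real, 'q) vec \<Rightarrow> real)
    \<Rightarrow> (real, 'p) vec \<times> (real, 'q) vec \<Rightarrow> real" where
  "Zop a g = (\<lambda>(\<theta>, r). \<Sum>i\<in>UNIV. a i r * dirderiv (axis i 1, 0) g (\<theta>, r))"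

definition Lop :: "(('p::{finite,linorder} \<Rightarrow> nat) \<times> ('q::{finite,linorder} \<Rightarrow> nat)) set
    \<Rightarrow> (('p \<Rightarrow> nat) \<times> ('q \<Rightarrow> nat) \<Rightarrow> (real, 'p) vec \<times> (real, 'q) vec \<Rightarrow> real)
    \<Rightarrow> ((real, 'p) vec \<times> (real, 'q) vec \<Rightarrow> real) \<Rightarrow> (real, 'p) vec \<times> (real, 'q) vec \<Rightarrow> real" where
  "Lop S C g = (\<lambda>x. \<Sum>(I, J)\<in>S. C (I, J) x * partial_IJ I J g x)"

definition incommensurable :: "('p::finite \<Rightarrow> (real, 'q::finite) vec \<Rightarrow> real) \<Rightarrow> (real, 'q) vec set \<Rightarrow> bool" where
  "incommensurable a B \<longleftrightarrow>
     \<not> (\<exists>k :: 'p \<Rightarrow> int. (\<exists>i. k i \<noteq> 0) \<and>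
          (\<exists>V. open V \<and> V \<noteq> {} \<and> V \<subseteq> B \<and> (\<forall>r\<in>V. (\<Sum>i\<in>UNIV. of_int (k i) * a i r) = 0)))"

end

theory Submission
  imports Defs "HOL-Computational_Algebra.Polynomial"
begin

section \<open>Basic calculus for dirderiv\<close>

lemma dd_has_real_derivative:
  fixes f :: "'a::euclidean_space \<Rightarrow> real"
  assumes "(f has_derivative f') (at (x + t0 *\<^sub>R v))"
  shows "((\<lambda>t. f (x + t *\<^sub>R v)) has_real_derivative f' v) (at t0)"
proof -
  have lin: "linear f'" using assms has_derivative_linear by blast
  have l: "((\<lambda>t. x + t *\<^sub>R v) has_derivative (\<lambda>t. t *\<^sub>R v)) (at t0)"
    by (auto intro!: derivative_eq_intros)
  have "((\<lambda>t. f (x + t *\<^sub>R v)) has_derivative (\<lambda>t. f' (t *\<^sub>R v))) (at t0)"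
    using has_derivative_compose[OF l assms] by (simp add: o_def)
  moreover have "(\<lambda>t. f' (t *\<^sub>R v)) = (\<lambda>t. f' v * t)"
    using lin by (auto simp: linear_scale)
  ultimately show ?thesis by (simp add: has_field_derivative_def)
qed

lemma dirderiv_eq:
  fixes f :: "'a::euclidean_space \<Rightarrow> real"
  assumes "(f has_derivative f') (at x)"
  shows "dirderiv v f x = f' v"
  unfolding dirderiv_def
  by (rule DERIV_imp_deriv, rule dd_has_real_derivative) (use assms in simp)

lemma dd_has_real_derivative':
  fixes f :: "'a::euclidean_space \<Rightarrow> real"
  assumes "f differentiable (at (x + t0 *\<^sub>R v))"
  shows "((\<lambda>t. f (x + t *\<^sub>R v)) has_real_derivative dirderiv v f (x + t0 *\<^sub>R v)) (at t0)"
proof -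
  obtain f' where f': "(f has_derivative f') (at (x + t0 *\<^sub>R v))"
    using assms by (auto simp: differentiable_def)
  show ?thesis using dd_has_real_derivative[OF f'] dirderiv_eq[OF f'] by simp
qed

lemma dd_has_real_derivative0:
  fixes f :: "'a::euclidean_space \<Rightarrow> real"
  assumes "f differentiable (at x)"
  shows "((\<lambda>t. f (x + t *\<^sub>R v)) has_real_derivative dirderiv v f x) (at 0)"
  using dd_has_real_derivative'[of f x 0 v] assms by simp

lemma eventually_line_in_open:
  fixes x v :: "'a::euclidean_space"
  assumes "open U" "x \<in> U"
  shows "eventually (\<lambda>t::real. x + t *\<^sub>R v \<in> U) (nhds 0)"
proof -
  obtain e where e: "e > 0" "ball x e \<subseteq> U" using assms open_contains_ball by blast
  show ?thesis unfolding eventually_nhds_metric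
  proof (intro exI[of _ "e / (norm v + 1)"] conjI allI impI)
    have "norm v + 1 > 0" by (simp add: add_nonneg_pos)
    then show "0 < e / (norm v + 1)" using e by (simp add: divide_pos_pos)
    fix t :: real assume "dist t 0 < e / (norm v + 1)"
    moreover have "norm v + 1 > 0" by (simp add: add_nonneg_pos)
    ultimately have t: "\<bar>t\<bar> * (norm v + 1) < e"
      by (simp add: pos_less_divide_eq)
    have "dist x (x + t *\<^sub>R v) = \<bar>t\<bar> * norm v" by (simp add: dist_norm)
    also have "\<dots> \<le> \<bar>t\<bar> * (norm v + 1)" by (simp add: mult_left_mono)
    finally have "dist x (x + t *\<^sub>R v) < e" using t by linarith
    then show "x + t *\<^sub>R v \<in> U" using e by auto
  qed
qed

lemma dirderiv_cong_open:
  fixes f g :: "'a::euclidean_space \<Rightarrow> real"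
  assumes "open U" "x \<in> U" "\<And>y. y \<in> U \<Longrightarrow> f y = g y"
  shows "dirderiv v f x = dirderiv v g x"
  unfolding dirderiv_def
  by (rule deriv_cong_ev[OF _ refl], rule eventually_mono[OF eventually_line_in_open[OF assms(1,2)]])
     (use assms in auto)

lemma iterdir_cong_open:
  fixes f g :: "'a::euclidean_space \<Rightarrow> real"
  assumes "open U" "\<And>y. y \<in> U \<Longrightarrow> f y = g y" "x \<in> U"
  shows "iterdir ds f x = iterdir ds g x"
  using assms(3)
proof (induction ds arbitrary: x)
  case Nil then show ?case using assms by simp
next
  case (Cons v ds) then show ?case
    using dirderiv_cong_open[OF assms(1) Cons.prems, of "iterdir ds f" "iterdir ds g" v] by simp
qed

lemma dirderiv_zero[simp]: "dirderiv 0 f x = 0"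
  by (simp add: dirderiv_def deriv_const)

lemma dirderiv_const[simp]: "dirderiv v (\<lambda>_. c) x = 0"
  by (simp add: dirderiv_def deriv_const)

lemma iterdir_append: "iterdir (xs @ ys) f = iterdir xs (iterdir ys f)"
  by (induction xs) auto

lemma iterdir_zero_in:
  assumes "0 \<in> set ds"
  shows "iterdir ds f = (\<lambda>_. 0)"
  using assms
proof (induction ds)
  case Nil then show ?case by simp
next
  case (Cons v ds)
  show ?case
  proof (cases "v = 0")
    case True then show ?thesis by (auto intro!: ext)
  next
    case False then have "iterdir ds f = (\<lambda>_. 0)" using Cons by auto
    then show ?thesis by (auto intro!: ext)
  qed
qed

lemma iterdir_const: "\<exists>c'. iterdir ds (\<lambda>_. c) = (\<lambda>_. c')"
proof (induction ds)
  case Nil then show ?case by auto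
next
  case (Cons v ds) then obtain c' where "iterdir ds (\<lambda>_. c) = (\<lambda>_. c')" by auto
  then show ?case by (auto intro!: ext)
qed

lemma smooth_const: "smooth_on U (\<lambda>_. c)"
  unfolding smooth_on_def
proof
  fix ds :: "'a list"
  obtain c' where "iterdir ds (\<lambda>_. c) = (\<lambda>_. c')" using iterdir_const by blast
  then show "iterdir ds (\<lambda>_. c) differentiable_on U" by simp
qed

lemma smooth_at:
  assumes "smooth_on U f" "open U" "x \<in> U"
  shows "iterdir ds f differentiable (at x)"
  using assms by (auto simp: smooth_on_def differentiable_on_eq_differentiable_at)

lemma smooth_atI:
  assumes "open U" "\<And>ds x. x \<in> U \<Longrightarrow> iterdir ds f differentiable (at x)"
  shows "smooth_on U f"
  using assms by (auto simp: smooth_on_def differentiable_on_eq_differentiable_at)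

lemma smooth_iterdir:
  assumes "smooth_on U f"
  shows "smooth_on U (iterdir ds f)"
  using assms by (auto simp: smooth_on_def iterdir_append[symmetric])

lemma smooth_differentiable:
  assumes "smooth_on U f" "open U" "x \<in> U"
  shows "f differentiable (at x)"
  using smooth_at[OF assms, of "[]"] by simp

lemma differentiable_transform_open:
  assumes "g differentiable (at x)" "open U" "x \<in> U" "\<And>y. y \<in> U \<Longrightarrow> g y = f y"
  shows "f differentiable (at x)"
  using assms has_derivative_transform_within_open unfolding differentiable_def by blast

lemma dirderiv_add:
  fixes f g :: "'a::euclidean_space \<Rightarrow> real"
  assumes "f differentiable (at x)" "g differentiable (at x)"
  shows "dirderiv v (\<lambda>y. f y + g y) x = dirderiv v f x + dirderiv v g x"
proof -
  obtain f' g' where f': "(f has_derivative f') (at x)" and g': "(g has_derivative g') (at x)"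
    using assms by (auto simp: differentiable_def)
  have "((\<lambda>y. f y + g y) has_derivative (\<lambda>h. f' h + g' h)) (at x)"
    using f' g' by (rule has_derivative_add)
  from dirderiv_eq[OF this] show ?thesis using dirderiv_eq[OF f'] dirderiv_eq[OF g'] by simp
qed

lemma dirderiv_mult:
  fixes f g :: "'a::euclidean_space \<Rightarrow> real"
  assumes "f differentiable (at x)" "g differentiable (at x)"
  shows "dirderiv v (\<lambda>y. f y * g y) x = dirderiv v f x * g x + f x * dirderiv v g x"
proof -
  obtain f' g' where f': "(f has_derivative f') (at x)" and g': "(g has_derivative g') (at x)"
    using assms by (auto simp: differentiable_def)
  have "((\<lambda>y. f y * g y) has_derivative (\<lambda>h. f x * g' h + f' h * g x)) (at x)"
    using f' g' by (rule has_derivative_mult)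
  from dirderiv_eq[OF this] show ?thesis using dirderiv_eq[OF f'] dirderiv_eq[OF g'] by simp
qed

lemma dirderiv_sum:
  fixes F :: "'i \<Rightarrow> 'a::euclidean_space \<Rightarrow> real"
  assumes "finite A" "\<And>i. i \<in> A \<Longrightarrow> F i differentiable (at x)"
  shows "dirderiv v (\<lambda>y. \<Sum>i\<in>A. F i y) x = (\<Sum>i\<in>A. dirderiv v (F i) x)"
  using assms
proof (induction A rule: finite_induct)
  case empty then show ?case by simp
next
  case (insert a A)
  have "dirderiv v (\<lambda>y. \<Sum>i\<in>insert a A. F i y) x = dirderiv v (\<lambda>y. F a y + (\<Sum>i\<in>A. F i y)) x"
    using insert by simp
  also have "\<dots> = dirderiv v (F a) x + dirderiv v (\<lambda>y. \<Sum>i\<in>A. F i y) x"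
    by (rule dirderiv_add) (use insert in \<open>auto intro!: differentiable_sum\<close>)
  finally show ?case using insert by simp
qed

lemma dirderiv_sum_list:
  fixes F :: "'i \<Rightarrow> 'a::euclidean_space \<Rightarrow> real"
  assumes "\<And>i. i \<in> set xs \<Longrightarrow> F i differentiable (at x)"
  shows "dirderiv v (\<lambda>y. \<Sum>i\<leftarrow>xs. F i y) x = (\<Sum>i\<leftarrow>xs. dirderiv v (F i) x)"
  using assms
proof (induction xs)
  case Nil then show ?case by simp
next
  case (Cons a xs)
  have d: "(\<lambda>y. \<Sum>i\<leftarrow>xs. F i y) differentiable (at x)"
    using Cons.prems by (induction xs) (auto intro!: differentiable_add)
  have "dirderiv v (\<lambda>y. \<Sum>i\<leftarrow>a # xs. F i y) x = dirderiv v (\<lambda>y. F a y + (\<Sum>i\<leftarrow>xs. F i y)) x"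
    by simp
  also have "\<dots> = dirderiv v (F a) x + dirderiv v (\<lambda>y. \<Sum>i\<leftarrow>xs. F i y) x"
    by (rule dirderiv_add) (use Cons.prems d in auto)
  finally show ?case using Cons by simp
qed

lemma differentiable_sum_list:
  assumes "\<And>i. i \<in> set xs \<Longrightarrow> F i differentiable (at x)"
  shows "(\<lambda>y. \<Sum>i\<leftarrow>xs. F i y :: real) differentiable (at x)"
  using assms by (induction xs) (auto intro!: differentiable_add)

lemma iterdir_sum:
  fixes F :: "'i \<Rightarrow> 'a::euclidean_space \<Rightarrow> real"
  assumes "open U" "finite A" "\<And>i. i \<in> A \<Longrightarrow> smooth_on U (F i)" "x \<in> U"
  shows "iterdir ds (\<lambda>y. \<Sum>i\<in>A. F i y) x = (\<Sum>i\<in>A. iterdir ds (F i) x)"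
  using assms(4)
proof (induction ds arbitrary: x)
  case Nil then show ?case by simp
next
  case (Cons v ds)
  have "iterdir (v # ds) (\<lambda>y. \<Sum>i\<in>A. F i y) x = dirderiv v (\<lambda>y. \<Sum>i\<in>A. iterdir ds (F i) y) x"
    using dirderiv_cong_open[OF assms(1) Cons.prems, of "iterdir ds (\<lambda>y. \<Sum>i\<in>A. F i y)"] Cons.IH
    by simp
  also have "\<dots> = (\<Sum>i\<in>A. iterdir (v # ds) (F i) x)"
    by (simp, rule dirderiv_sum[OF assms(2)], rule smooth_at[OF assms(3) assms(1) Cons.prems])
  finally show ?case .
qed

lemma smooth_sum:
  fixes F :: "'i \<Rightarrow> 'a::euclidean_space \<Rightarrow> real"
  assumes "open U" "finite A" "\<And>i. i \<in> A \<Longrightarrow> smooth_on U (F i)"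
  shows "smooth_on U (\<lambda>y. \<Sum>i\<in>A. F i y)"
proof (rule smooth_atI[OF assms(1)])
  fix ds x assume x: "x \<in> U"
  have "(\<lambda>y. \<Sum>i\<in>A. iterdir ds (F i) y) differentiable (at x)"
    by (rule differentiable_sum[OF assms(2)]) (use smooth_at[OF assms(3) assms(1) x] in auto)
  then show "iterdir ds (\<lambda>y. \<Sum>i\<in>A. F i y) differentiable (at x)"
    by (rule differentiable_transform_open[OF _ assms(1) x])
       (use iterdir_sum[OF assms] in auto)
qed

section \<open>Leibniz rule\<close>

fun splits :: "'a list \<Rightarrow> ('a list \<times> 'a list) list" where
  "splits [] = [([], [])]"
| "splits (v # ds) = concat (map (\<lambda>(l, r). [(v # l, r), (l, v # r)]) (splits ds))"

lemma sum_list_map_concat: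
  "sum_list (map f (concat xss)) = sum_list (map (\<lambda>xs. sum_list (map f xs)) xss)"
  by (induction xss) auto

lemma leibniz:
  fixes f g :: "'a::euclidean_space \<Rightarrow> real"
  assumes "open U" "smooth_on U f" "smooth_on U g" "x \<in> U"
  shows "iterdir ds (\<lambda>y. f y * g y) x = (\<Sum>(l, r)\<leftarrow>splits ds. iterdir l f x * iterdir r g x)"
  using assms(4)
proof (induction ds arbitrary: x)
  case Nil then show ?case by simp
next
  case (Cons v ds)
  have "iterdir (v # ds) (\<lambda>y. f y * g y) x
      = dirderiv v (\<lambda>y. \<Sum>p\<leftarrow>splits ds. iterdir (fst p) f y * iterdir (snd p) g y) x"
    using dirderiv_cong_open[OF assms(1) Cons.prems, of "iterdir ds (\<lambda>y. f y * g y)"] Cons.IH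
    by (simp add: split_def)
  also have "\<dots> = (\<Sum>p\<leftarrow>splits ds. dirderiv v (\<lambda>y. iterdir (fst p) f y * iterdir (snd p) g y) x)"
    by (rule dirderiv_sum_list)
       (auto intro!: differentiable_mult smooth_at[OF assms(2) assms(1) Cons.prems]
          smooth_at[OF assms(3) assms(1) Cons.prems])
  also have "\<dots> = (\<Sum>p\<leftarrow>splits ds. iterdir (v # fst p) f x * iterdir (snd p) g x
                     + iterdir (fst p) f x * iterdir (v # snd p) g x)"
    by (rule arg_cong[where f = sum_list], rule map_cong[OF refl], simp, rule dirderiv_mult)
       (auto intro!: smooth_at[OF assms(2) assms(1) Cons.prems]
          smooth_at[OF assms(3) assms(1) Cons.prems])
  also have "\<dots> = (\<Sum>(l, r)\<leftarrow>splits (v # ds). iterdir l f x * iterdir r g x)"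
    by (simp add: sum_list_map_concat o_def split_def)
  finally show ?case .
qed

lemma smooth_mult:
  fixes f g :: "'a::euclidean_space \<Rightarrow> real"
  assumes "open U" "smooth_on U f" "smooth_on U g"
  shows "smooth_on U (\<lambda>y. f y * g y)"
proof (rule smooth_atI[OF assms(1)])
  fix ds x assume x: "x \<in> U"
  have "(\<lambda>y. \<Sum>(l, r)\<leftarrow>splits ds. iterdir l f y * iterdir r g y) differentiable (at x)"
    by (simp add: split_def, rule differentiable_sum_list)
       (auto intro!: differentiable_mult smooth_at[OF assms(2) assms(1) x] smooth_at[OF assms(3) assms(1) x])
  then show "iterdir ds (\<lambda>y. f y * g y) differentiable (at x)"
    by (rule differentiable_transform_open[OF _ assms(1) x]) (use leibniz[OF assms] in auto)
qed

section \<open>Product space\<close>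

lemma iterdir_fst:
  fixes f :: "'a::euclidean_space \<Rightarrow> real"
  shows "iterdir ds (\<lambda>y::'a \<times> 'b::euclidean_space. f (fst y)) = (\<lambda>y. iterdir (map fst ds) f (fst y))"
proof (induction ds)
  case Nil then show ?case by simp
next
  case (Cons v ds) then show ?case
    by (simp add: dirderiv_def[abs_def])
qed

lemma iterdir_snd:
  fixes f :: "'b::euclidean_space \<Rightarrow> real"
  shows "iterdir ds (\<lambda>y::'a::euclidean_space \<times> 'b. f (snd y)) = (\<lambda>y. iterdir (map snd ds) f (snd y))"
proof (induction ds)
  case Nil then show ?case by simp
next
  case (Cons v ds) then show ?case
    by (simp add: dirderiv_def[abs_def])
qed

lemma smooth_fst:
  fixes f :: "'a::euclidean_space \<Rightarrow> real"
  assumes "smooth_on UNIV f"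
  shows "smooth_on (UNIV::('a \<times> 'b::euclidean_space) set) (\<lambda>y. f (fst y))"
proof (rule smooth_atI)
  fix ds :: "('a \<times> 'b) list" and x :: "'a \<times> 'b"
  have "iterdir (map fst ds) f differentiable (at (fst x))"
    using smooth_at[OF assms] by auto
  then show "iterdir ds (\<lambda>y. f (fst y)) differentiable (at x)"
    unfolding iterdir_fst by (rule differentiable_compose[OF _ bounded_linear_imp_differentiable[OF bounded_linear_fst]])
qed simp

lemma smooth_snd:
  fixes f :: "'b::euclidean_space \<Rightarrow> real"
  assumes "smooth_on B f" "open B"
  shows "smooth_on ((UNIV::'a::euclidean_space set) \<times> B) (\<lambda>y. f (snd y))"
proof (rule smooth_atI)
  fix ds :: "('a \<times> 'b) list" and x :: "'a \<times> 'b" assume x: "x \<in> UNIV \<times> B"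
  have "iterdir (map snd ds) f differentiable (at (snd x))"
    using smooth_at[OF assms] x by auto
  then show "iterdir ds (\<lambda>y. f (snd y)) differentiable (at x)"
    unfolding iterdir_snd by (rule differentiable_compose[OF _ bounded_linear_imp_differentiable[OF bounded_linear_snd]])
qed (use assms in \<open>auto intro: open_Times\<close>)

lemma tensor_th:
  fixes \<phi> :: "'i \<Rightarrow> 'a::euclidean_space \<Rightarrow> real" and c :: "'i \<Rightarrow> 'b::euclidean_space \<Rightarrow> real"
  assumes "finite A" "\<And>i. i \<in> A \<Longrightarrow> smooth_on UNIV (\<phi> i)"
  shows "iterdir (map (\<lambda>v. (v, 0)) xs) (\<lambda>y. \<Sum>i\<in>A. \<phi> i (fst y) * c i (snd y))
       = (\<lambda>y. \<Sum>i\<in>A. iterdir xs (\<phi> i) (fst y) * c i (snd y))"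
proof (induction xs)
  case Nil then show ?case by simp
next
  case (Cons v xs)
  show ?case
  proof (rule ext, clarsimp simp: Cons)
    fix a :: 'a and b :: 'b
    have "dirderiv (v, 0) (\<lambda>y. \<Sum>i\<in>A. iterdir xs (\<phi> i) (fst y) * c i (snd y)) (a, b)
        = deriv (\<lambda>t. \<Sum>i\<in>A. iterdir xs (\<phi> i) (a + t *\<^sub>R v) * c i b) 0"
      by (simp add: dirderiv_def)
    also have "\<dots> = (\<Sum>i\<in>A. dirderiv v (iterdir xs (\<phi> i)) a * c i b)"
      by (rule DERIV_imp_deriv, rule DERIV_sum, rule DERIV_cmult_right,
          rule dd_has_real_derivative0, rule smooth_at[OF assms(2)]) simp_all
    finally show "dirderiv (v, 0) (\<lambda>y. \<Sum>i\<in>A. iterdir xs (\<phi> i) (fst y) * c i (snd y)) (a, b)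
        = (\<Sum>i\<in>A. dirderiv v (iterdir xs (\<phi> i)) a * c i b)" .
  qed
qed

lemma tensor_r:
  fixes \<phi> :: "'i \<Rightarrow> 'a::euclidean_space \<Rightarrow> real" and k :: "'i \<Rightarrow> 'b::euclidean_space \<Rightarrow> real"
  assumes "open B" "finite A" "\<And>i. i \<in> A \<Longrightarrow> smooth_on B (k i)" "r \<in> B"
  shows "iterdir (map (\<lambda>w. (0, w)) ys) (\<lambda>y. \<Sum>i\<in>A. \<phi> i (fst y) * k i (snd y)) (\<theta>, r)
       = (\<Sum>i\<in>A. \<phi> i \<theta> * iterdir ys (k i) r)"
  using assms(4)
proof (induction ys arbitrary: \<theta> r)
  case Nil then show ?case by simp
next
  case (Cons w ys)
  have U: "open ((UNIV::'a set) \<times> B)" using assms(1) by (auto intro: open_Times)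
  have "iterdir (map (\<lambda>w. (0, w)) (w # ys)) (\<lambda>y. \<Sum>i\<in>A. \<phi> i (fst y) * k i (snd y)) (\<theta>, r)
      = dirderiv (0, w) (\<lambda>y. \<Sum>i\<in>A. \<phi> i (fst y) * iterdir ys (k i) (snd y)) (\<theta>, r)"
  proof -
    have "iterdir (map (\<lambda>w. (0, w)) ys) (\<lambda>y. \<Sum>i\<in>A. \<phi> i (fst y) * k i (snd y)) y
        = (\<Sum>i\<in>A. \<phi> i (fst y) * iterdir ys (k i) (snd y))" if "y \<in> UNIV \<times> B" for y
      using Cons.IH[of "snd y" "fst y"] that by (cases y) simp
    then show ?thesis
      by (simp only: list.map iterdir.simps) (rule dirderiv_cong_open[OF U], use Cons.prems in auto)
  qed
  also have "\<dots> = deriv (\<lambda>t. \<Sum>i\<in>A. \<phi> i \<theta> * iterdir ys (k i) (r + t *\<^sub>R w)) 0"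
    by (simp add: dirderiv_def)
  also have "\<dots> = (\<Sum>i\<in>A. \<phi> i \<theta> * dirderiv w (iterdir ys (k i)) r)"
    by (rule DERIV_imp_deriv, rule DERIV_sum, rule DERIV_cmult,
          rule dd_has_real_derivative0, rule smooth_at[OF assms(3) assms(1) Cons.prems])
  finally show ?case by simp
qed

lemma tensor:
  fixes \<phi> :: "'i \<Rightarrow> 'a::euclidean_space \<Rightarrow> real" and k :: "'i \<Rightarrow> 'b::euclidean_space \<Rightarrow> real"
  assumes "open B" "finite A" "\<And>i. i \<in> A \<Longrightarrow> smooth_on UNIV (\<phi> i)"
    "\<And>i. i \<in> A \<Longrightarrow> smooth_on B (k i)" "r \<in> B"
  shows "iterdir (map (\<lambda>v. (v, 0)) xs @ map (\<lambda>w. (0, w)) ys) (\<lambda>y. \<Sum>i\<in>A. \<phi> i (fst y) * k i (snd y)) (\<theta>, r)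
       = (\<Sum>i\<in>A. iterdir xs (\<phi> i) \<theta> * iterdir ys (k i) r)"
proof -
  have U: "open ((UNIV::'a set) \<times> B)" using assms(1) by (auto intro: open_Times)
  have "iterdir (map (\<lambda>v. (v, 0)) xs @ map (\<lambda>w. (0, w)) ys) (\<lambda>y. \<Sum>i\<in>A. \<phi> i (fst y) * k i (snd y)) (\<theta>, r)
     = iterdir (map (\<lambda>v. (v, 0)) xs) (\<lambda>y. \<Sum>i\<in>A. \<phi> i (fst y) * iterdir ys (k i) (snd y)) (\<theta>, r)"
    unfolding iterdir_append
  proof (rule iterdir_cong_open[OF U])
    fix y :: "'a \<times> 'b" assume "y \<in> UNIV \<times> B"
    then show "iterdir (map (Pair 0) ys) (\<lambda>y. \<Sum>i\<in>A. \<phi> i (fst y) * k i (snd y)) y =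
         (\<Sum>i\<in>A. \<phi> i (fst y) * iterdir ys (k i) (snd y))"
      using tensor_r[OF assms(1,2,4), where r="snd y" and ys=ys and \<theta>="fst y" and \<phi>=\<phi>] by (cases y) simp
  qed (use assms(5) in simp)
  also have "\<dots> = (\<Sum>i\<in>A. iterdir xs (\<phi> i) \<theta> * iterdir ys (k i) r)"
    using tensor_th[where \<phi>=\<phi> and A=A and c="\<lambda>i. iterdir ys (k i)" and xs=xs, OF assms(2,3)] by simp
  finally show ?thesis .
qed

section \<open>Cosine test functions\<close>

lemma cos_has_derivative:
  fixes w :: "'a::euclidean_space"
  shows "((\<lambda>\<theta>. A * cos (w \<bullet> \<theta> + \<beta>)) has_derivative (\<lambda>h. A * (- sin (w \<bullet> x + \<beta>) * (w \<bullet> h)))) (at x)"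
  by (auto intro!: derivative_eq_intros)

lemma dirderiv_cos:
  fixes w :: "'a::euclidean_space"
  shows "dirderiv v (\<lambda>\<theta>. A * cos (w \<bullet> \<theta> + \<beta>)) x = A * (w \<bullet> v) * cos (w \<bullet> x + \<beta> + pi / 2)"
  using dirderiv_eq[OF cos_has_derivative[where A=A and w=w and \<beta>=\<beta> and x=x], of v] by (simp add: cos_add)

lemma iterdir_cos:
  fixes w :: "'a::euclidean_space"
  shows "iterdir ds (\<lambda>\<theta>. A * cos (w \<bullet> \<theta> + \<beta>))
       = (\<lambda>\<theta>. A * prod_list (map (\<lambda>d. w \<bullet> d) ds) * cos (w \<bullet> \<theta> + \<beta> + real (length ds) * (pi / 2)))"
proof (induction ds)
  case Nil then show ?case by simp
next
  case (Cons v ds)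
  show ?case
  proof
    fix x
    have "iterdir (v # ds) (\<lambda>\<theta>. A * cos (w \<bullet> \<theta> + \<beta>)) x
       = dirderiv v (\<lambda>\<theta>. (A * prod_list (map (\<lambda>d. w \<bullet> d) ds)) * cos (w \<bullet> \<theta> + (\<beta> + real (length ds) * (pi / 2)))) x"
      using Cons by (simp add: add.assoc)
    also have "\<dots> = (A * prod_list (map (\<lambda>d. w \<bullet> d) ds)) * (w \<bullet> v) * cos (w \<bullet> x + (\<beta> + real (length ds) * (pi / 2)) + pi / 2)"
      by (rule dirderiv_cos)
    also have "\<dots> = A * prod_list (map (\<lambda>d. w \<bullet> d) (v # ds)) * cos (w \<bullet> x + \<beta> + real (length (v # ds)) * (pi / 2))"
    proof -
      have eq: "w \<bullet> x + (\<beta> + real (length ds) * (pi / 2)) + pi / 2 = w \<bullet> x + \<beta> + real (length (v # ds)) * (pi / 2)"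
        by (simp add: algebra_simps)
      show ?thesis unfolding eq[symmetric] by (simp add: mult_ac)
    qed
    finally show "iterdir (v # ds) (\<lambda>\<theta>. A * cos (w \<bullet> \<theta> + \<beta>)) x = \<dots>" .
  qed
qed

lemma smooth_cos:
  fixes w :: "'a::euclidean_space"
  shows "smooth_on UNIV (\<lambda>\<theta>. A * cos (w \<bullet> \<theta> + \<beta>))"
proof (rule smooth_atI)
  fix ds and x :: 'a
  show "iterdir ds (\<lambda>\<theta>. A * cos (w \<bullet> \<theta> + \<beta>)) differentiable (at x)"
    unfolding iterdir_cos
    using cos_has_derivative[of "A * prod_list (map ((\<bullet>) w) ds)" w "\<beta> + real (length ds) * (pi / 2)" x]
    by (simp add: add.assoc differentiable_def) blast
qed simp

definition adirs :: "('i::{finite,linorder} \<Rightarrow> nat) \<Rightarrow> (real, 'i) vec list" where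
  "adirs I = concat (map (\<lambda>i. replicate (I i) (axis i 1)) (sorted_list_of_set UNIV))"

lemma theta_dirs_eq: "theta_dirs I = map (\<lambda>v. (v, 0)) (adirs I)"
  by (simp add: theta_dirs_def adirs_def map_concat o_def)

lemma r_dirs_eq: "r_dirs J = map (\<lambda>w. (0, w)) (adirs J)"
  by (simp add: r_dirs_def adirs_def map_concat o_def)

lemma prod_list_map_concat:
  "prod_list (map f (concat xss)) = prod_list (map (\<lambda>xs. prod_list (map f xs)) xss)"
  by (induction xss) auto

lemma prod_adirs: "prod_list (map (\<lambda>d. w \<bullet> d) (adirs I)) = (\<Prod>i\<in>UNIV. (w $ i) ^ (I i))"
proof -
  have "prod_list (map (\<lambda>d. w \<bullet> d) (adirs I)) = prod_list (map (\<lambda>i. (w $ i) ^ (I i)) (sorted_list_of_set UNIV))"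
    by (simp add: adirs_def prod_list_map_concat o_def inner_axis)
  also have "\<dots> = (\<Prod>i\<in>UNIV. (w $ i) ^ (I i))"
    by (subst prod.distinct_set_conv_list[symmetric]) auto
  finally show ?thesis .
qed

lemma length_adirs: "length (adirs I) = (\<Sum>i\<in>UNIV. I i)"
proof -
  have "length (adirs I) = sum_list (map I (sorted_list_of_set UNIV))"
    by (simp add: adirs_def length_concat o_def)
  also have "\<dots> = (\<Sum>i\<in>UNIV. I i)"
    by (subst sum.distinct_set_conv_list[symmetric]) auto
  finally show ?thesis .
qed

definition cnt :: "'i::finite \<Rightarrow> (real, 'i) vec list \<Rightarrow> nat" where
  "cnt j ds = count (mset ds) (axis j 1)"

lemma cnt_concat_aux:
  "distinct xs \<Longrightarrow> count (mset (concat (map (\<lambda>i. replicate (I i) (axis i (1::real))) xs))) (axis j 1)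
     = (if j \<in> set xs then I j else 0)"
  by (induction xs) (auto simp: axis_eq_axis)

lemma cnt_adirs: "cnt j (adirs I) = I j"
  unfolding cnt_def adirs_def by (subst cnt_concat_aux) auto

lemma set_adirs: "set (adirs I) \<subseteq> range (\<lambda>j. axis j 1)"
  by (auto simp: adirs_def)

section \<open>Polynomial test functions\<close>

definition gp :: "('i::finite \<Rightarrow> real) \<Rightarrow> ('i \<Rightarrow> nat) \<Rightarrow> (real, 'i) vec \<Rightarrow> (real, 'i) vec \<Rightarrow> real" where
  "gp A m c = (\<lambda>r. \<Prod>j\<in>UNIV. A j * (r $ j - c $ j) ^ (m j))"

lemma dirderiv_gp_axis:
  "dirderiv (axis j0 1) (gp A m c) r = gp (A(j0 := A j0 * real (m j0))) (m(j0 := m j0 - 1)) c r"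
proof -
  define R where "R = (\<Prod>j\<in>UNIV - {j0}. A j * (r $ j - c $ j) ^ (m j))"
  have eq: "(\<lambda>t. gp A m c (r + t *\<^sub>R axis j0 1)) = (\<lambda>t. A j0 * (r $ j0 + t - c $ j0) ^ (m j0) * R)"
  proof
    fix t
    have "gp A m c (r + t *\<^sub>R axis j0 1) = A j0 * ((r + t *\<^sub>R axis j0 1) $ j0 - c $ j0) ^ (m j0) *
          (\<Prod>j\<in>UNIV - {j0}. A j * ((r + t *\<^sub>R axis j0 1) $ j - c $ j) ^ (m j))"
      unfolding gp_def by (subst prod.remove[of UNIV j0]) auto
    also have "(\<Prod>j\<in>UNIV - {j0}. A j * ((r + t *\<^sub>R axis j0 1) $ j - c $ j) ^ (m j)) = R"
      unfolding R_def by (rule prod.cong) (auto simp: axis_def)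
    finally show "gp A m c (r + t *\<^sub>R axis j0 1) = A j0 * (r $ j0 + t - c $ j0) ^ (m j0) * R"
      by (simp add: axis_def)
  qed
  have d: "((\<lambda>t. (r $ j0 + t - c $ j0) ^ (m j0)) has_real_derivative
        real (m j0) * (r $ j0 - c $ j0) ^ (m j0 - 1)) (at 0)"
    by (auto intro!: derivative_eq_intros)
  have "((\<lambda>t. A j0 * (r $ j0 + t - c $ j0) ^ (m j0) * R) has_real_derivative
        A j0 * (real (m j0) * (r $ j0 - c $ j0) ^ (m j0 - 1)) * R) (at 0)"
    by (intro DERIV_cmult DERIV_cmult_right d)
  then have "dirderiv (axis j0 1) (gp A m c) r = A j0 * real (m j0) * (r $ j0 - c $ j0) ^ (m j0 - 1) * R"
    unfolding dirderiv_def eq by (auto dest!: DERIV_imp_deriv)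
  also have "\<dots> = gp (A(j0 := A j0 * real (m j0))) (m(j0 := m j0 - 1)) c r"
    unfolding gp_def R_def by (subst prod.remove[of UNIV j0]) (auto intro!: prod.cong)
  finally show ?thesis .
qed

definition ff :: "nat \<Rightarrow> nat \<Rightarrow> real" where
  "ff K n = (\<Prod>i<n. real (K - i))"

lemma iterdir_gp:
  assumes "set ds \<subseteq> range (\<lambda>j. axis j 1)"
  shows "iterdir ds (gp A m c) = gp (\<lambda>j. A j * ff (m j) (cnt j ds)) (\<lambda>j. m j - cnt j ds) c"
  using assms
proof (induction ds)
  case Nil then show ?case by (simp add: cnt_def ff_def)
next
  case (Cons v ds)
  then obtain j0 where v: "v = axis j0 1" by auto
  have IH: "iterdir ds (gp A m c) = gp (\<lambda>j. A j * ff (m j) (cnt j ds)) (\<lambda>j. m j - cnt j ds) c"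
    using Cons by auto
  have c: "cnt j (v # ds) = cnt j ds + (if j = j0 then 1 else 0)" for j
    by (auto simp: cnt_def v axis_eq_axis)
  have A: "((\<lambda>j. A j * ff (m j) (cnt j ds))(j0 := A j0 * ff (m j0) (cnt j0 ds) * real (m j0 - cnt j0 ds)))
        = (\<lambda>j. A j * ff (m j) (cnt j (v # ds)))"
    by (auto simp: c ff_def)
  have M: "((\<lambda>j. m j - cnt j ds)(j0 := m j0 - Suc (cnt j0 ds))) = (\<lambda>j. m j - cnt j (v # ds))"
    by (auto simp: c)
  show ?case
    by (rule ext) (simp add: IH v dirderiv_gp_axis A M del: fun_upd_apply)
qed

lemma ff_zero: "ff K n * 0 ^ (K - n) = (if n = K then fact K else 0)"
proof (cases "n = K")
  case True
  have "ff K K = fact K"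
  proof (induction K)
    case 0 then show ?case by (simp add: ff_def)
  next
    case (Suc K)
    have "ff (Suc K) (Suc K) = real (Suc K) * ff K K"
      unfolding ff_def by (subst prod.lessThan_Suc_shift) simp
    then show ?case using Suc by simp
  qed
  then show ?thesis using True by simp
next
  case False
  show ?thesis
  proof (cases "n < K")
    case True then show ?thesis using False by simp
  next
    case nK: False
    then have "K \<in> {..<n}" using False by auto
    then have "ff K n = 0" unfolding ff_def by (intro prod_zero) auto
    then show ?thesis using False by simp
  qed
qed

definition hpoly :: "('i::finite \<Rightarrow> nat) \<Rightarrow> (real, 'i) vec \<Rightarrow> (real, 'i) vec \<Rightarrow> real" where
  "hpoly K c = gp (\<lambda>_. 1) K c"

lemma iterdir_hpoly_at:
  assumes "set ds \<subseteq> range (\<lambda>j. axis j 1)"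
  shows "iterdir ds (hpoly K c) c = (if (\<forall>j. cnt j ds = K j) then (\<Prod>j\<in>UNIV. fact (K j)) else 0)"
proof -
  have "iterdir ds (hpoly K c) c = (\<Prod>j\<in>UNIV. ff (K j) (cnt j ds) * 0 ^ (K j - cnt j ds))"
    unfolding hpoly_def iterdir_gp[OF assms] by (simp add: gp_def)
  also have "\<dots> = (\<Prod>j\<in>UNIV. if cnt j ds = K j then fact (K j) else 0)"
    by (simp add: ff_zero)
  also have "\<dots> = (if (\<forall>j. cnt j ds = K j) then (\<Prod>j\<in>UNIV. fact (K j)) else 0)"
    by (auto intro: prod_zero)
  finally show ?thesis .
qed

lemma smooth_prod:
  fixes F :: "'i \<Rightarrow> 'a::euclidean_space \<Rightarrow> real"
  assumes "open U" "finite A" "\<And>i. i \<in> A \<Longrightarrow> smooth_on U (F i)"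
  shows "smooth_on U (\<lambda>y. \<Prod>i\<in>A. F i y)"
  using assms(2,3)
proof (induction A rule: finite_induct)
  case empty then show ?case by (simp add: smooth_const)
next
  case (insert a A)
  then show ?case by (simp, intro smooth_mult[OF assms(1)]) auto
qed

lemma smooth_power:
  fixes f :: "'a::euclidean_space \<Rightarrow> real"
  assumes "open U" "smooth_on U f"
  shows "smooth_on U (\<lambda>y. f y ^ n)"
  using smooth_prod[OF assms(1), of "{..<n}" "\<lambda>_. f"] assms by simp

lemma smooth_coord:
  "smooth_on UNIV (\<lambda>r::(real, 'i::finite) vec. r $ j - c)"
proof (rule smooth_atI)
  fix ds :: "(real, 'i) vec list" and x
  show "iterdir ds (\<lambda>r. r $ j - c) differentiable (at x)"
  proof (cases ds rule: rev_cases)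
    case Nil
    have "((\<lambda>r::(real, 'i) vec. r \<bullet> axis j 1 - c) has_derivative (\<lambda>h. h \<bullet> axis j 1)) (at x)"
      by (auto intro!: derivative_eq_intros)
    then show ?thesis using Nil by (simp add: cart_eq_inner_axis differentiable_def) blast
  next
    case (snoc ds' v)
    have "dirderiv v (\<lambda>r. r $ j - c) = (\<lambda>_. v $ j)"
      by (rule ext, simp add: dirderiv_def, rule DERIV_imp_deriv) (auto intro!: derivative_eq_intros)
    then show ?thesis using snoc iterdir_const[of ds' "v $ j"]
      by (auto simp: iterdir_append)
  qed
qed simp

lemma smooth_hpoly:
  fixes K :: "'i::finite \<Rightarrow> nat"
  shows "smooth_on UNIV (hpoly K c)"
proof -
  have "smooth_on UNIV (\<lambda>y::(real,'i) vec. (y $ j - c $ j) ^ K j)" for j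
    by (rule smooth_power[OF open_UNIV smooth_coord])
  then show ?thesis unfolding hpoly_def gp_def
    by (intro smooth_prod) simp_all
qed

lemma splits_mset: "p \<in> set (splits ds) \<Longrightarrow> mset (fst p) + mset (snd p) = mset ds"
  by (induction ds arbitrary: p) auto

lemma splits_filter: "filter (\<lambda>p. fst p = []) (splits ds) = [([], ds)]"
proof (induction ds)
  case Nil then show ?case by simp
next
  case (Cons v ds)
  have "filter (\<lambda>p. fst p = []) (concat (map (\<lambda>(l, r). [(v # l, r), (l, v # r)]) xs))
      = map (\<lambda>(l, r). (l, v # r)) (filter (\<lambda>p. fst p = []) xs)" for xs :: "('a list \<times> 'a list) list"
    by (induction xs) auto
  then show ?case using Cons by simp
qed

lemma sum_list_filter_zero:
  assumes "\<And>x. x \<in> set xs \<Longrightarrow> \<not> P x \<Longrightarrow> f x = (0::real)"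
  shows "sum_list (map f xs) = sum_list (map f (filter P xs))"
  using assms by (induction xs) auto

lemma smooth_on_subset: "smooth_on U f \<Longrightarrow> V \<subseteq> U \<Longrightarrow> smooth_on V f"
  by (auto simp: smooth_on_def intro: differentiable_on_subset)

lemma splits_count:
  assumes "p \<in> set (splits ds)"
  shows "count (mset (fst p)) y + count (mset (snd p)) y = count (mset ds) y"
  using arg_cong[OF splits_mset[OF assms], of "\<lambda>M. count M y"] by simp

lemma cnt_le_split:
  assumes "p \<in> set (splits ds)"
  shows "cnt j (snd p) \<le> cnt j ds" "cnt j (fst p) \<le> cnt j ds"
  using splits_count[OF assms, of "axis j 1"] unfolding cnt_def by linarith+

lemma split_set:
  assumes "p \<in> set (splits ds)"
  shows "set (snd p) \<subseteq> set ds" "set (fst p) \<subseteq> set ds"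
proof -
  have "set_mset (mset (fst p) + mset (snd p)) = set_mset (mset ds)"
    using splits_mset[OF assms] by simp
  then have "set (fst p) \<union> set (snd p) = set ds" by simp
  then show "set (snd p) \<subseteq> set ds" "set (fst p) \<subseteq> set ds" by blast+
qed

lemma leib_eval:
  fixes k :: "(real, 'q::{finite,linorder}) vec \<Rightarrow> real"
  assumes "open B" "r0 \<in> B" "smooth_on B k"
  shows "iterdir (adirs J) (\<lambda>r. k r * hpoly K r0 r) r0 =
     (\<Sum>p\<leftarrow>splits (adirs J). iterdir (fst p) k r0 *
        (if (\<forall>j. cnt j (snd p) = K j) then (\<Prod>j\<in>UNIV. fact (K j)) else 0))"
proof -
  have h: "smooth_on B (hpoly K r0)" using smooth_on_subset[OF smooth_hpoly] by blast
  have "iterdir (adirs J) (\<lambda>r. k r * hpoly K r0 r) r0 =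
     (\<Sum>p\<leftarrow>splits (adirs J). iterdir (fst p) k r0 * iterdir (snd p) (hpoly K r0) r0)"
    using leibniz[OF assms(1,3) h assms(2)] by (simp add: split_def)
  also have "\<dots> = (\<Sum>p\<leftarrow>splits (adirs J). iterdir (fst p) k r0 *
        (if (\<forall>j. cnt j (snd p) = K j) then (\<Prod>j\<in>UNIV. fact (K j)) else 0))"
  proof (rule arg_cong[where f = sum_list], rule map_cong[OF refl])
    fix p assume p: "p \<in> set (splits (adirs J))"
    have "set (snd p) \<subseteq> range (\<lambda>j. axis j 1)" using split_set[OF p] set_adirs by blast
    then show "iterdir (fst p) k r0 * iterdir (snd p) (hpoly K r0) r0 = iterdir (fst p) k r0 *
        (if (\<forall>j. cnt j (snd p) = K j) then (\<Prod>j\<in>UNIV. fact (K j)) else 0)"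
      by (simp add: iterdir_hpoly_at)
  qed
  finally show ?thesis .
qed

lemma leib_eval_less:
  fixes k :: "(real, 'q::{finite,linorder}) vec \<Rightarrow> real"
  assumes "open B" "r0 \<in> B" "smooth_on B k" "J j < K j"
  shows "iterdir (adirs J) (\<lambda>r. k r * hpoly K r0 r) r0 = 0"
proof -
  have "\<not> (\<forall>j. cnt j (snd p) = K j)" if "p \<in> set (splits (adirs J))" for p
  proof
    assume "\<forall>j. cnt j (snd p) = K j"
    then have "K j \<le> J j" using cnt_le_split(1)[OF that, of j] by (simp add: cnt_adirs)
    then show False using assms(4) by simp
  qed
  then show ?thesis unfolding leib_eval[OF assms(1-3)]
    by (subst sum_list_filter_zero[where P="\<lambda>_. False"]) auto
qed

lemma leib_eval_eq:
  fixes k :: "(real, 'q::{finite,linorder}) vec \<Rightarrow> real"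
  assumes "open B" "r0 \<in> B" "smooth_on B k"
  shows "iterdir (adirs K) (\<lambda>r. k r * hpoly K r0 r) r0 = k r0 * (\<Prod>j\<in>UNIV. fact (K j))"
proof -
  let ?f = "\<lambda>p. iterdir (fst p) k r0 * (if (\<forall>j. cnt j (snd p) = K j) then (\<Prod>j\<in>UNIV. fact (K j)) else 0)"
  have z: "?f p = 0" if p: "p \<in> set (splits (adirs K))" and ne: "\<not> fst p = []" for p
  proof -
    obtain x where x: "x \<in> set (fst p)" using ne by (cases "fst p") auto
    then obtain j where xj: "x = axis j 1" using split_set(2)[OF p] set_adirs by blast
    have "cnt j (fst p) > 0" using x xj by (simp add: cnt_def)
    moreover have "cnt j (fst p) + cnt j (snd p) = cnt j (adirs K)"
      using splits_count[OF p] unfolding cnt_def by simp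
    ultimately have "cnt j (snd p) \<noteq> K j" by (simp add: cnt_adirs)
    then show ?thesis by auto
  qed
  have "iterdir (adirs K) (\<lambda>r. k r * hpoly K r0 r) r0 = sum_list (map ?f (splits (adirs K)))"
    by (rule leib_eval[OF assms])
  also have "\<dots> = sum_list (map ?f (filter (\<lambda>p. fst p = []) (splits (adirs K))))"
    by (rule sum_list_filter_zero) (use z in blast)
  also have "\<dots> = k r0 * (\<Prod>j\<in>UNIV. fact (K j))"
    by (simp add: splits_filter cnt_adirs)
  finally show ?thesis .
qed

lemma hpoly_eval:
  "iterdir (adirs J) (hpoly K r0) r0 = (if J = K then (\<Prod>j\<in>UNIV. fact (K j)) else 0)"
  using iterdir_hpoly_at[OF set_adirs, of J K r0] by (auto simp: cnt_adirs)

lemma poly1_zero: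
  fixes c :: "nat \<Rightarrow> real"
  assumes "finite E" "\<And>t::int. (\<Sum>n\<in>E. c n * real_of_int t ^ n) = 0" "n \<in> E"
  shows "c n = 0"
proof -
  define p where "p = (\<Sum>n\<in>E. monom (c n) n)"
  have ev: "poly p x = (\<Sum>n\<in>E. c n * x ^ n)" for x
    by (simp add: p_def poly_sum poly_monom)
  have "p = 0"
  proof (rule ccontr)
    assume "p \<noteq> 0"
    then have "finite {x. poly p x = 0}" by (rule poly_roots_finite)
    moreover have "range real_of_int \<subseteq> {x. poly p x = 0}" using assms(2) ev by auto
    moreover have "infinite (range real_of_int)"
      using finite_imageD[of real_of_int UNIV] infinite_UNIV_int by (auto simp: inj_on_def)
    ultimately show False using finite_subset by blast
  qed
  then have "coeff p n = 0" by simp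
  moreover have "coeff p n = c n"
    using assms(1,3) by (simp add: p_def coeff_sum coeff_monom)
  ultimately show ?thesis by simp
qed

lemma mpoly_zero_aux:
  fixes A :: "'p set"
  assumes "finite A"
  shows "\<forall>F (d :: ('p \<Rightarrow> nat) \<Rightarrow> real). finite F \<longrightarrow> (\<forall>N\<in>F. \<forall>i. i \<notin> A \<longrightarrow> N i = 0) \<longrightarrow>
     (\<forall>m::'p \<Rightarrow> int. (\<Sum>N\<in>F. d N * (\<Prod>i\<in>A. real_of_int (m i) ^ N i)) = 0) \<longrightarrow> (\<forall>N\<in>F. d N = 0)"
  using assms
proof (induction A rule: finite_induct)
  case empty
  show ?case
  proof (intro allI impI ballI)
    fix F and d :: "('p \<Rightarrow> nat) \<Rightarrow> real" and N
    assume F: "finite F" "\<forall>N\<in>F. \<forall>i. i \<notin> {} \<longrightarrow> N i = 0"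
      "\<forall>m::'p \<Rightarrow> int. (\<Sum>N\<in>F. d N * (\<Prod>i\<in>{}. real_of_int (m i) ^ N i)) = 0" and N: "N \<in> F"
    have z: "x = (\<lambda>_. 0)" if "x \<in> F" for x using F(2) that by (auto simp: fun_eq_iff)
    have "F = {N}" using z N by blast
    then show "d N = 0" using F(3) by simp
  qed
next
  case (insert a A)
  show ?case
  proof (intro allI impI ballI)
    fix F and d :: "('p \<Rightarrow> nat) \<Rightarrow> real" and N
    assume F: "finite F" "\<forall>N\<in>F. \<forall>i. i \<notin> insert a A \<longrightarrow> N i = 0"
      and Z: "\<forall>m::'p \<Rightarrow> int. (\<Sum>N\<in>F. d N * (\<Prod>i\<in>insert a A. real_of_int (m i) ^ N i)) = 0"
      and N: "N \<in> F"
    define P where "P m N = (\<Prod>i\<in>A. real_of_int (m i) ^ N i)" for m :: "'p \<Rightarrow> int" and N :: "'p \<Rightarrow> nat"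
    define E where "E = (\<lambda>N. N a) ` F"
    have finE: "finite E" using F(1) by (simp add: E_def)
    have grp: "(\<Sum>n\<in>E. (\<Sum>N\<in>{N\<in>F. N a = n}. d N * P m N) * real_of_int t ^ n) = 0" for m t
    proof -
      have "0 = (\<Sum>N\<in>F. d N * (\<Prod>i\<in>insert a A. real_of_int ((m(a := t)) i) ^ N i))"
        using Z by simp
      also have "\<dots> = (\<Sum>N\<in>F. d N * P m N * real_of_int t ^ (N a))"
      proof (intro sum.cong refl)
        fix N
        have pa: "(\<Prod>i\<in>A. real_of_int ((m(a := t)) i) ^ N i) = P m N"
          unfolding P_def by (rule prod.cong) (use insert.hyps in auto)
        show "d N * (\<Prod>i\<in>insert a A. real_of_int ((m(a := t)) i) ^ N i) = d N * P m N * real_of_int t ^ (N a)"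
          using insert.hyps pa by (simp add: mult_ac)
      qed
      also have "\<dots> = (\<Sum>n\<in>E. \<Sum>N\<in>{N\<in>F. N a = n}. d N * P m N * real_of_int t ^ (N a))"
        unfolding E_def by (rule sum.image_gen[OF F(1)])
      also have "\<dots> = (\<Sum>n\<in>E. (\<Sum>N\<in>{N\<in>F. N a = n}. d N * P m N) * real_of_int t ^ n)"
        by (auto simp: sum_distrib_right intro!: sum.cong)
      finally show ?thesis by simp
    qed
    define n where "n = N a"
    have nE: "n \<in> E" using N by (simp add: E_def n_def)
    have coef: "(\<Sum>N\<in>{N\<in>F. N a = n}. d N * P m N) = 0" for m
      using poly1_zero[OF finE grp nE] by blast
    define Fn where "Fn = (\<lambda>N. N(a := 0)) ` {N\<in>F. N a = n}"
    define d' where "d' N' = d (N'(a := n))" for N'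
    have inj: "inj_on (\<lambda>N. N(a := 0)) {N\<in>F. N a = n}"
    proof (rule inj_onI)
      fix x y assume xy: "x \<in> {N\<in>F. N a = n}" "y \<in> {N\<in>F. N a = n}" and eq: "x(a := 0) = y(a := 0)"
      show "x = y"
      proof
        fix i show "x i = y i"
        proof (cases "i = a")
          case True then show ?thesis using xy by simp
        next
          case False then show ?thesis using fun_cong[OF eq, of i] by simp
        qed
      qed
    qed
    have h1: "finite Fn" using F(1) by (simp add: Fn_def)
    have h2: "\<forall>N\<in>Fn. \<forall>i. i \<notin> A \<longrightarrow> N i = 0" using F(2) by (auto simp: Fn_def)
    have h3: "\<forall>m::'p \<Rightarrow> int. (\<Sum>N'\<in>Fn. d' N' * (\<Prod>i\<in>A. real_of_int (m i) ^ N' i)) = 0"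
    proof
      fix m :: "'p \<Rightarrow> int"
      have "(\<Sum>N'\<in>Fn. d' N' * (\<Prod>i\<in>A. real_of_int (m i) ^ N' i))
          = (\<Sum>N\<in>{N\<in>F. N a = n}. d' (N(a := 0)) * (\<Prod>i\<in>A. real_of_int (m i) ^ (N(a := 0)) i))"
        unfolding Fn_def by (rule sum.reindex[OF inj, unfolded o_def])
      also have "\<dots> = (\<Sum>N\<in>{N\<in>F. N a = n}. d N * P m N)"
      proof (intro sum.cong refl)
        fix N assume "N \<in> {N\<in>F. N a = n}"
        then have "(N(a := 0))(a := n) = N" by auto
        moreover have "(\<Prod>i\<in>A. real_of_int (m i) ^ (N(a := 0)) i) = P m N"
          unfolding P_def by (rule prod.cong) (use insert.hyps in auto)
        ultimately show "d' (N(a := 0)) * (\<Prod>i\<in>A. real_of_int (m i) ^ (N(a := 0)) i) = d N * P m N"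
          by (simp add: d'_def)
      qed
      finally show "(\<Sum>N'\<in>Fn. d' N' * (\<Prod>i\<in>A. real_of_int (m i) ^ N' i)) = 0" using coef by simp
    qed
    have h4: "N(a := 0) \<in> Fn" using N by (auto simp: Fn_def n_def)
    have "d' (N(a := 0)) = 0" using insert.IH h1 h2 h3 h4 by blast
    then show "d N = 0" by (simp add: d'_def n_def)
  qed
qed

lemma mpoly_zero:
  fixes d :: "('p::finite \<Rightarrow> nat) \<Rightarrow> real"
  assumes "finite F" "\<And>m::'p \<Rightarrow> int. (\<Sum>N\<in>F. d N * (\<Prod>i\<in>UNIV. real_of_int (m i) ^ N i)) = 0" "N \<in> F"
  shows "d N = 0"
  using mpoly_zero_aux[of "UNIV::'p set"] assms by auto

lemma trig_extract:
  fixes d :: "('p::finite \<Rightarrow> nat) \<Rightarrow> real"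
  assumes "finite F"
    and Z: "\<And>m::'p \<Rightarrow> int. \<And>\<beta>. (\<Sum>N\<in>F. d N * (\<Prod>i\<in>UNIV. (2 * pi * real_of_int (m i)) ^ N i)
              * cos (\<beta> + real (\<Sum>i\<in>UNIV. N i) * (pi / 2))) = 0"
    and N: "N \<in> F"
  shows "d N = 0"
proof -
  define s where "s N = real (\<Sum>i\<in>UNIV. N i) * (pi / 2)" for N :: "'p \<Rightarrow> nat"
  have pr: "(\<Prod>i\<in>UNIV. (2 * pi * real_of_int (m i)) ^ N i) = (2 * pi) ^ (\<Sum>i\<in>UNIV. N i) * (\<Prod>i\<in>UNIV. real_of_int (m i) ^ N i)"
    for m :: "'p \<Rightarrow> int" and N :: "'p \<Rightarrow> nat"
    by (simp add: power_mult_distrib prod.distrib power_sum)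
  have c1: "d N * (2 * pi) ^ (\<Sum>i\<in>UNIV. N i) * cos (s N) = 0"
  proof (rule mpoly_zero[OF assms(1) _ N, where d = "\<lambda>N. d N * (2 * pi) ^ (\<Sum>i\<in>UNIV. N i) * cos (s N)"])
    fix m :: "'p \<Rightarrow> int"
    show "(\<Sum>N\<in>F. d N * (2 * pi) ^ (\<Sum>i\<in>UNIV. N i) * cos (s N) * (\<Prod>i\<in>UNIV. real_of_int (m i) ^ N i)) = 0"
      using Z[of m 0] by (simp only: pr s_def add_0_left) (simp add: mult_ac)
  qed
  have c2: "d N * (2 * pi) ^ (\<Sum>i\<in>UNIV. N i) * sin (s N) = 0"
  proof (rule mpoly_zero[OF assms(1) _ N, where d = "\<lambda>N. d N * (2 * pi) ^ (\<Sum>i\<in>UNIV. N i) * sin (s N)"])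
    fix m :: "'p \<Rightarrow> int"
    have "(\<Sum>N\<in>F. d N * (\<Prod>i\<in>UNIV. (2 * pi * real_of_int (m i)) ^ N i) * cos (pi / 2 + s N)) = 0"
      using Z[of m "pi / 2"] by (simp only: s_def)
    then have "(\<Sum>N\<in>F. - (d N * (2 * pi) ^ (\<Sum>i\<in>UNIV. N i) * sin (s N) * (\<Prod>i\<in>UNIV. real_of_int (m i) ^ N i))) = 0"
      by (simp only: pr cos_add cos_pi_half sin_pi_half) (simp add: mult_ac)
    then show "(\<Sum>N\<in>F. d N * (2 * pi) ^ (\<Sum>i\<in>UNIV. N i) * sin (s N) * (\<Prod>i\<in>UNIV. real_of_int (m i) ^ N i)) = 0"
      by (simp add: sum_negf)
  qed
  have h: "sin (s N)^2 + cos (s N)^2 = 1" by (rule sin_cos_squared_add)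
  have "cos (s N) \<noteq> 0 \<or> sin (s N) \<noteq> 0"
  proof (rule ccontr)
    assume "\<not> (cos (s N) \<noteq> 0 \<or> sin (s N) \<noteq> 0)"
    then show False using h by simp
  qed
  then show ?thesis using c1 c2 by auto
qed

section \<open>Periodicity\<close>

lemma vec_axis_sum: "(\<chi> i. f i) = (\<Sum>i\<in>UNIV. f i *\<^sub>R axis i (1::real))"
  by (simp add: vec_eq_iff sum_component axis_def if_distrib cong: if_cong)

lemma per_nat:
  assumes "theta_periodic g"
  shows "g (\<theta> + real n *\<^sub>R axis i 1, r) = g (\<theta>, r)"
proof (induction n)
  case 0 then show ?case by simp
next
  case (Suc n)
  have "g (\<theta> + real (Suc n) *\<^sub>R axis i 1, r) = g ((\<theta> + real n *\<^sub>R axis i 1) + axis i 1, r)"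
    by (simp add: algebra_simps)
  also have "\<dots> = g (\<theta> + real n *\<^sub>R axis i 1, r)"
    using assms by (simp add: theta_periodic_def)
  finally show ?case using Suc by simp
qed

lemma per_int:
  assumes "theta_periodic g"
  shows "g (\<theta> + real_of_int k *\<^sub>R axis i 1, r) = g (\<theta>, r)"
proof (cases "k \<ge> 0")
  case True
  then obtain n where "k = int n" using nonneg_int_cases by blast
  then show ?thesis using per_nat[OF assms] by simp
next
  case False
  then obtain n where n: "k = - int n" by (metis nle_le nonpos_int_cases)
  have "g (\<theta>, r) = g ((\<theta> - real n *\<^sub>R axis i 1) + real n *\<^sub>R axis i 1, r)" by simp
  also have "\<dots> = g (\<theta> - real n *\<^sub>R axis i 1, r)" by (rule per_nat[OF assms])
  finally show ?thesis using n by (simp add: algebra_simps)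
qed

lemma per_vec:
  assumes "theta_periodic g"
  shows "g (\<theta> + (\<chi> i. real_of_int (k i)), r) = g (\<theta>, r)"
proof -
  have "g (\<theta> + (\<Sum>i\<in>A. real_of_int (k i) *\<^sub>R axis i 1), r) = g (\<theta>, r)" if "finite A" for A
    using that
  proof (induction A arbitrary: \<theta> rule: finite_induct)
    case empty then show ?case by simp
  next
    case (insert a A)
    have "g (\<theta> + (\<Sum>i\<in>insert a A. real_of_int (k i) *\<^sub>R axis i 1), r)
        = g ((\<theta> + (\<Sum>i\<in>A. real_of_int (k i) *\<^sub>R axis i 1)) + real_of_int (k a) *\<^sub>R axis a 1, r)"
      using insert by (simp add: algebra_simps)
    also have "\<dots> = g (\<theta> + (\<Sum>i\<in>A. real_of_int (k i) *\<^sub>R axis i 1), r)" by (rule per_int[OF assms])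
    finally show ?case using insert by simp
  qed
  then show ?thesis by (simp add: vec_axis_sum)
qed

lemma periodic_bounded:
  fixes g :: "(real, 'p::finite) vec \<times> (real, 'q::finite) vec \<Rightarrow> real"
  assumes "theta_periodic g" "continuous_on UNIV (\<lambda>\<theta>. g (\<theta>, r))"
  shows "\<exists>M. \<forall>\<theta>. \<bar>g (\<theta>, r)\<bar> \<le> M"
proof -
  have "compact ((\<lambda>\<theta>. g (\<theta>, r)) ` cbox 0 (\<chi> i. 1))"
    by (rule compact_continuous_image[OF continuous_on_subset[OF assms(2)]]) auto
  then obtain M where M: "\<And>y. y \<in> (\<lambda>\<theta>. g (\<theta>, r)) ` cbox 0 (\<chi> i. 1) \<Longrightarrow> norm y \<le> M"
    using compact_imp_bounded bounded_iff by metis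
  have "\<bar>g (\<theta>, r)\<bar> \<le> M" for \<theta>
  proof -
    define \<theta>' where "\<theta>' = \<theta> + (\<chi> i. real_of_int (- \<lfloor>\<theta> $ i\<rfloor>))"
    have "\<theta>' \<in> cbox 0 (\<chi> i. 1)"
      unfolding \<theta>'_def mem_box_cart by (auto simp: frac_lt_1 less_imp_le floor_le_iff) linarith
    moreover have "g (\<theta>', r) = g (\<theta>, r)" unfolding \<theta>'_def by (rule per_vec[OF assms(1)])
    ultimately show ?thesis using M by force
  qed
  then show ?thesis by blast
qed

section \<open>Flow along Z\<close>

lemma flow_deriv:
  fixes F :: "(real, 'p::finite) vec \<times> (real, 'q::finite) vec \<Rightarrow> real"
  assumes "F differentiable (at (\<theta> + t0 *\<^sub>R (\<chi> i. a i r0), r0))"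
  shows "((\<lambda>t. F (\<theta> + t *\<^sub>R (\<chi> i. a i r0), r0)) has_real_derivative
            Zop a F (\<theta> + t0 *\<^sub>R (\<chi> i. a i r0), r0)) (at t0)"
proof -
  let ?v = "(\<chi> i. a i r0)"
  obtain F' where F': "(F has_derivative F') (at (\<theta> + t0 *\<^sub>R ?v, r0))"
    using assms by (auto simp: differentiable_def)
  have lin: "linear F'" using F' has_derivative_linear by blast
  have p: "(\<theta>, r0) + t0 *\<^sub>R (?v, 0) = (\<theta> + t0 *\<^sub>R ?v, r0)" by simp
  have d: "((\<lambda>t. F ((\<theta>, r0) + t *\<^sub>R (?v, 0))) has_real_derivative F' (?v, 0)) (at t0)"
    by (rule dd_has_real_derivative) (simp add: F')
  have vs: "(?v, 0::(real,'q) vec) = (\<Sum>i\<in>UNIV. a i r0 *\<^sub>R (axis i 1, 0))"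
    by (simp add: prod_eq_iff fst_sum snd_sum vec_axis_sum[of "\<lambda>i. a i r0"])
  have "F' (?v, 0) = (\<Sum>i\<in>UNIV. a i r0 * F' (axis i 1, 0))"
    unfolding vs linear_sum[OF lin] by (rule sum.cong[OF refl]) (simp add: linear_scale[OF lin] del: scaleR_Pair)
  also have "\<dots> = Zop a F (\<theta> + t0 *\<^sub>R ?v, r0)"
    by (simp add: Zop_def dirderiv_eq[OF F'])
  finally show ?thesis using d by simp
qed

lemma flow_const:
  fixes F :: "(real, 'p::finite) vec \<times> (real, 'q::finite) vec \<Rightarrow> real"
  assumes diff: "\<And>\<theta>. F differentiable (at (\<theta>, r0))"
    and per: "theta_periodic F"
    and Z: "\<And>\<theta>. Zop a F (\<theta>, r0) = E"
  shows "E = 0" and "\<And>\<theta> t. F (\<theta> + t *\<^sub>R (\<chi> i. a i r0), r0) = F (\<theta>, r0)"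
proof -
  let ?v = "(\<chi> i. a i r0)"
  have cont: "continuous_on UNIV (\<lambda>\<theta>. F (\<theta>, r0))"
  proof (rule continuous_at_imp_continuous_on, rule ballI)
    fix \<theta> :: "(real, 'p) vec"
    have "isCont F (\<theta>, r0)" using diff differentiable_imp_continuous_within by blast
    then show "isCont (\<lambda>\<theta>. F (\<theta>, r0)) \<theta>"
      by (intro isCont_o2[where f="\<lambda>\<theta>. (\<theta>, r0)" and g=F]) (auto intro: continuous_intros)
  qed
  obtain M where M: "\<And>\<theta>. \<bar>F (\<theta>, r0)\<bar> \<le> M" using periodic_bounded[OF per cont] by blast
  have lin: "F (\<theta> + t *\<^sub>R ?v, r0) = F (\<theta>, r0) + t * E" for \<theta> t
  proof -
    have "((\<lambda>t. F (\<theta> + t *\<^sub>R ?v, r0) - t * E) has_real_derivative 0) (at s)" for s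
    proof -
      have fd: "((\<lambda>t. F (\<theta> + t *\<^sub>R ?v, r0)) has_real_derivative Zop a F (\<theta> + s *\<^sub>R ?v, r0)) (at s)"
        by (rule flow_deriv[OF diff])
      have "((\<lambda>t. F (\<theta> + t *\<^sub>R ?v, r0) - t * E) has_real_derivative Zop a F (\<theta> + s *\<^sub>R ?v, r0) - 1 * E) (at s)"
        by (rule DERIV_diff[OF fd DERIV_cmult_right[OF DERIV_ident]])
      then show ?thesis using Z by simp
    qed
    then have "\<forall>s. ((\<lambda>t. F (\<theta> + t *\<^sub>R ?v, r0) - t * E) has_real_derivative 0) (at s)" by blast
    from DERIV_isconst_all[OF this, of t 0]
    have "(\<lambda>t. F (\<theta> + t *\<^sub>R ?v, r0) - t * E) t = (\<lambda>t. F (\<theta> + t *\<^sub>R ?v, r0) - t * E) 0" .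
    then show ?thesis by simp
  qed
  show "E = 0"
  proof (rule ccontr)
    assume E: "E \<noteq> 0"
    define t where "t = (2 * M + 1) / E"
    have "F (0 + t *\<^sub>R ?v, r0) = F (0, r0) + (2 * M + 1)" using lin[of 0 t] E by (simp add: t_def)
    then show False using M[of "0 + t *\<^sub>R ?v"] M[of 0] by linarith
  qed
  then show "\<And>\<theta> t. F (\<theta> + t *\<^sub>R ?v, r0) = F (\<theta>, r0)" using lin by simp
qed

definition good :: "('p::finite \<Rightarrow> (real, 'q::finite) vec \<Rightarrow> real) \<Rightarrow> (real, 'q) vec \<Rightarrow> bool" where
  "good a r \<longleftrightarrow> (\<forall>k::'p \<Rightarrow> int. (\<exists>i. k i \<noteq> 0) \<longrightarrow> (\<Sum>i\<in>UNIV. of_int (k i) * a i r) \<noteq> 0)"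

lemma good_inj:
  assumes "good a r"
  shows "inj (\<lambda>i. a i r)"
proof (rule injI, rule ccontr)
  fix i1 i2 assume eq: "a i1 r = a i2 r" and ne: "i1 \<noteq> i2"
  define k :: "_ \<Rightarrow> int" where "k i = (if i = i1 then 1 else 0) - (if i = i2 then 1 else 0)" for i
  have "(\<Sum>i\<in>UNIV. of_int (k i) * a i r) = (\<Sum>i\<in>UNIV. (if i = i1 then a i r else 0) - (if i = i2 then a i r else 0))"
    by (rule sum.cong[OF refl]) (simp add: k_def)
  also have "\<dots> = a i1 r - a i2 r" by (simp only: sum_subtractf sum.delta finite UNIV_I if_True)
  also have "\<dots> = 0" using eq by simp
  finally have "(\<Sum>i\<in>UNIV. of_int (k i) * a i r) = 0" .
  moreover have "k i1 \<noteq> 0" using ne by (simp add: k_def)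
  ultimately show False using assms unfolding good_def by blast
qed

lemma good_indep:
  fixes a :: "'p::finite \<Rightarrow> (real, 'q::finite) vec \<Rightarrow> real"
  assumes g: "good a r" and e: "bij_betw e {..<CARD('p)} (UNIV::'p set)"
  shows "inj_on (\<lambda>j. a (e j) r) {..<CARD('p)}"
    and "module.independent (\<lambda>r. (*) (real_of_int r)) ((\<lambda>j. a (e j) r) ` {..<CARD('p)})"
proof -
  have inj: "inj (\<lambda>i. a i r)" by (rule good_inj[OF g])
  show "inj_on (\<lambda>j. a (e j) r) {..<CARD('p)}"
    using e inj unfolding bij_betw_def inj_on_def by blast
  interpret module "(\<lambda>r. (*) (real_of_int r))"
    by (simp add: Modules.module.intro distrib_left mult.commute)
  show "independent ((\<lambda>j. a (e j) r) ` {..<CARD('p)})"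
  proof
    assume "dependent ((\<lambda>j. a (e j) r) ` {..<CARD('p)})"
    then obtain T u where T: "finite T" "T \<subseteq> (\<lambda>j. a (e j) r) ` {..<CARD('p)}"
      "(\<Sum>v\<in>T. real_of_int (u v) * v) = 0" and nz: "\<exists>v\<in>T. u v \<noteq> 0"
      unfolding dependent_explicit by blast
    define k where "k i = (if a i r \<in> T then u (a i r) else 0)" for i
    have "(\<Sum>i\<in>UNIV. of_int (k i) * a i r) = (\<Sum>i\<in>{i. a i r \<in> T}. of_int (u (a i r)) * a i r)"
      unfolding k_def by (rule sum.mono_neutral_cong_right) auto
    also have "\<dots> = (\<Sum>v\<in>(\<lambda>i. a i r) ` {i. a i r \<in> T}. real_of_int (u v) * v)"
      by (rule sum.reindex[symmetric, unfolded o_def]) (use inj in \<open>auto simp: inj_on_def\<close>)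
    also have "(\<lambda>i. a i r) ` {i. a i r \<in> T} = T" using T(2) by auto
    finally have s0: "(\<Sum>i\<in>UNIV. of_int (k i) * a i r) = 0" using T(3) by simp
    obtain v where v: "v \<in> T" "u v \<noteq> 0" using nz by blast
    then obtain i where "v = a i r" using T(2) by auto
    then have "k i \<noteq> 0" using v by (simp add: k_def)
    then show False using g s0 unfolding good_def by blast
  qed
qed

lemma kron_flow:
  fixes F :: "(real, 'p::finite) vec \<times> (real, 'q::finite) vec \<Rightarrow> real"
  assumes g: "good a r0"
    and inv: "\<And>\<theta> t. F (\<theta> + t *\<^sub>R (\<chi> i. a i r0), r0) = F (\<theta>, r0)"
    and per: "theta_periodic F"
    and cont: "continuous_on UNIV (\<lambda>\<theta>. F (\<theta>, r0))"
  shows "F (\<theta>, r0) = F (\<theta>', r0)"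
proof (rule ccontr)
  assume ne: "F (\<theta>, r0) \<noteq> F (\<theta>', r0)"
  define \<epsilon> where "\<epsilon> = \<bar>F (\<theta>, r0) - F (\<theta>', r0)\<bar>"
  have \<epsilon>: "\<epsilon> > 0" using ne by (simp add: \<epsilon>_def)
  obtain \<delta> where \<delta>: "\<delta> > 0" "\<And>x. dist x \<theta>' < \<delta> \<Longrightarrow> dist (F (x, r0)) (F (\<theta>', r0)) < \<epsilon>"
    using cont \<epsilon> unfolding continuous_on_iff by blast
  let ?n = "CARD('p)"
  obtain e where e: "bij_betw e {0..<?n} (UNIV::'p set)"
    using ex_bij_betw_nat_finite[of "UNIV::'p set"] by auto
  have e': "bij_betw e {..<?n} (UNIV::'p set)" using e by (simp add: lessThan_atLeast0)
  define \<epsilon>0 where "\<epsilon>0 = \<delta> / (real ?n + 1)"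
  have \<epsilon>0: "\<epsilon>0 > 0" using \<delta> by (simp add: \<epsilon>0_def)
  obtain t h where th: "\<And>j. j < ?n \<Longrightarrow> \<bar>t * a (e j) r0 - of_int (h j) - (\<theta>' $ e j - \<theta> $ e j)\<bar> < \<epsilon>0"
    using Kronecker_thm_1[OF good_indep(2)[OF g e'] good_indep(1)[OF g e'] \<epsilon>0,
        of "\<lambda>j. \<theta>' $ e j - \<theta> $ e j"] by blast
  define ie where "ie = inv_into {..<?n} e"
  have ie: "ie i < ?n" "e (ie i) = i" for i
  proof -
    have i: "i \<in> e ` {..<?n}" using e' by (auto simp: bij_betw_def)
    show "ie i < ?n" using inv_into_into[OF i] unfolding ie_def by simp
    show "e (ie i) = i" using f_inv_into_f[OF i] unfolding ie_def by simp
  qed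
  define x where "x = (\<theta> + t *\<^sub>R (\<chi> i. a i r0)) + (\<chi> i. real_of_int (- h (ie i)))"
  have comp: "\<bar>(x - \<theta>') $ i\<bar> < \<epsilon>0" for i
  proof -
    have "(x - \<theta>') $ i = t * a (e (ie i)) r0 - of_int (h (ie i)) - (\<theta>' $ e (ie i) - \<theta> $ e (ie i))"
      by (simp add: x_def ie(2))
    then show ?thesis using th[OF ie(1)] by simp
  qed
  have "dist x \<theta>' \<le> (\<Sum>i\<in>UNIV. \<bar>(x - \<theta>') $ i\<bar>)"
    unfolding dist_norm by (rule norm_le_l1_cart)
  also have "\<dots> \<le> (\<Sum>i\<in>(UNIV::'p set). \<epsilon>0)" by (intro sum_mono less_imp_le comp)
  also have "\<dots> = real ?n * \<epsilon>0" by simp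
  also have "\<dots> < \<delta>"
  proof -
    have "real ?n * \<epsilon>0 < (real ?n + 1) * \<epsilon>0" using \<epsilon>0 by simp
    also have "\<dots> = \<delta>" by (simp add: \<epsilon>0_def)
    finally show ?thesis .
  qed
  finally have "dist (F (x, r0)) (F (\<theta>', r0)) < \<epsilon>" by (rule \<delta>(2))
  moreover have "F (x, r0) = F (\<theta>, r0)"
    unfolding x_def using per_vec[OF per, of "\<theta> + t *\<^sub>R (\<chi> i. a i r0)" "\<lambda>i. - h (ie i)" r0] inv[of \<theta> t]
    by (simp only: of_int_minus)
  ultimately show False by (simp add: \<epsilon>_def dist_real_def)
qed

lemma good_dense:
  fixes a :: "'p::finite \<Rightarrow> (real, 'q::finite) vec \<Rightarrow> real"
  assumes inc: "incommensurable a (ball c \<rho>)"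
    and cont: "\<And>i. continuous_on (ball c \<rho>) (a i)"
    and r0: "r0 \<in> ball c \<rho>"
  shows "r0 \<in> closure {r \<in> ball c \<rho>. good a r}"
proof -
  define \<epsilon> where "\<epsilon> = (\<rho> - dist c r0) / 2"
  have \<epsilon>: "\<epsilon> > 0" using r0 by (simp add: \<epsilon>_def)
  define S where "S = cball r0 \<epsilon>"
  have SB: "S \<subseteq> ball c \<rho>"
  proof
    fix y assume "y \<in> S"
    then have "dist r0 y \<le> \<epsilon>" by (simp add: S_def)
    then have "dist c y < \<rho>" using dist_triangle[of c y r0] r0 by (simp add: \<epsilon>_def)
    then show "y \<in> ball c \<rho>" by simp
  qed
  define f where "f k r = (\<Sum>i\<in>UNIV. of_int (k i) * a i r)" for k :: "'p \<Rightarrow> int" and r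
  have fcont: "continuous_on S (f k)" for k
    unfolding f_def
    by (intro continuous_intros continuous_on_subset[OF cont SB])
  define T where "T k = {r \<in> S. (\<exists>i. k i \<noteq> 0) \<longrightarrow> f k r \<noteq> 0}" for k
  have Topen: "openin (top_of_set S) (T k)" for k
  proof (cases "\<exists>i. k i \<noteq> 0")
    case True
    have "T k = S \<inter> f k -` (- {0})" using True by (auto simp: T_def)
    then show ?thesis using continuous_openin_preimage_gen[OF fcont, of "- {0}" k] by auto
  next
    case False
    then have "T k = S" by (auto simp: T_def)
    then show ?thesis by simp
  qed
  have Tdense: "S \<subseteq> closure (T k)" for k
  proof (cases "\<exists>i. k i \<noteq> 0")
    case False
    then have "T k = S" by (auto simp: T_def)
    then show ?thesis using closure_subset by blast
  next
    case True
    show ?thesis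
    proof
      fix y assume y: "y \<in> S"
      show "y \<in> closure (T k)"
        unfolding closure_approachable
      proof (intro allI impI)
        fix e :: real assume e: "e > 0"
        have "y \<in> closure (ball r0 \<epsilon>)" using y \<epsilon> by (simp add: S_def closure_ball)
        then obtain z where z: "z \<in> ball r0 \<epsilon>" "dist z y < e / 2"
          using e unfolding closure_approachable by (meson half_gt_zero)
        define \<delta> where "\<delta> = min (e / 2) (\<epsilon> - dist r0 z)"
        have \<delta>: "\<delta> > 0" using z e by (simp add: \<delta>_def)
        have WS: "ball z \<delta> \<subseteq> S"
        proof
          fix x assume "x \<in> ball z \<delta>"
          then have "dist z x < \<epsilon> - dist r0 z" by (simp add: \<delta>_def)
          then have "dist r0 x < \<epsilon>" using dist_triangle[of r0 x z] by linarith
          then show "x \<in> S" by (simp add: S_def)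
        qed
        have "\<exists>x\<in>ball z \<delta>. f k x \<noteq> 0"
        proof (rule ccontr)
          assume "\<not> (\<exists>x\<in>ball z \<delta>. f k x \<noteq> 0)"
          then have "\<forall>r\<in>ball z \<delta>. (\<Sum>i\<in>UNIV. of_int (k i) * a i r) = 0" by (simp add: f_def)
          moreover have "ball z \<delta> \<noteq> {}" using \<delta> by simp
          ultimately show False using inc True WS SB unfolding incommensurable_def
            by (meson open_ball order_trans)
        qed
        then obtain x where x: "x \<in> ball z \<delta>" "f k x \<noteq> 0" by blast
        have "x \<in> T k" using x WS by (auto simp: T_def)
        moreover have "dist x y < e"
        proof -
          have "dist z x < e / 2" using x by (simp add: \<delta>_def)
          then show ?thesis using z(2) dist_triangle[of x y z] by (simp add: dist_commute)
        qed
        ultimately show "\<exists>x\<in>T k. dist x y < e" by blast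
      qed
    qed
  qed
  have "S \<subseteq> closure (\<Inter>(range T))"
  proof (rule Baire)
    show "closed S" by (simp add: S_def)
    show "countable (range T)" by simp
    fix U assume "U \<in> range T"
    then show "openin (top_of_set S) U \<and> S \<subseteq> closure U" using Topen Tdense by blast
  qed
  moreover have "r0 \<in> S" using \<epsilon> by (simp add: S_def)
  moreover have "\<Inter>(range T) \<subseteq> {r \<in> ball c \<rho>. good a r}"
  proof
    fix r assume r: "r \<in> \<Inter>(range T)"
    then have "r \<in> S" by (auto simp: T_def)
    moreover have "good a r" using r unfolding good_def T_def f_def by blast
    ultimately show "r \<in> {r \<in> ball c \<rho>. good a r}" using SB by auto
  qed
  ultimately show ?thesis using closure_mono by blast
qed

lemma indep_final:
  fixes F :: "(real, 'p::finite) vec \<times> (real, 'q::finite) vec \<Rightarrow> real"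
    and a :: "'p \<Rightarrow> (real, 'q) vec \<Rightarrow> real"
  assumes inc: "incommensurable a (ball c \<rho>)"
    and cont: "\<And>i. continuous_on (ball c \<rho>) (a i)"
    and diff: "\<And>\<theta> r. r \<in> ball c \<rho> \<Longrightarrow> F differentiable (at (\<theta>, r))"
    and per: "theta_periodic F"
    and Z: "\<And>\<theta> r. r \<in> ball c \<rho> \<Longrightarrow> Zop a F (\<theta>, r) = 0"
    and r0: "r0 \<in> ball c \<rho>"
  shows "F (\<theta>, r0) = F (\<theta>', r0)"
proof -
  have isc: "isCont F (\<theta>, r)" if "r \<in> ball c \<rho>" for \<theta> r
    using diff[OF that] differentiable_imp_continuous_within by blast
  have gd: "F (\<theta>, r) = F (\<theta>', r)" if r: "r \<in> ball c \<rho>" "good a r" for r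
  proof (rule kron_flow[OF r(2)])
    show "F (\<theta> + t *\<^sub>R (\<chi> i. a i r), r) = F (\<theta>, r)" for \<theta> t
      by (rule flow_const(2)[OF diff[OF r(1)] per Z[OF r(1)]])
    show "theta_periodic F" by (rule per)
    show "continuous_on UNIV (\<lambda>\<theta>. F (\<theta>, r))"
    proof (rule continuous_at_imp_continuous_on, rule ballI)
      fix \<theta> :: "(real, 'p) vec"
      show "isCont (\<lambda>\<theta>. F (\<theta>, r)) \<theta>"
        by (intro isCont_o2[where f="\<lambda>\<theta>. (\<theta>, r)" and g=F] isc[OF r(1)]) (auto intro: continuous_intros)
    qed
  qed
  obtain s where s: "\<And>n. s n \<in> {r \<in> ball c \<rho>. good a r}" "s \<longlonglongrightarrow> r0"
    using good_dense[OF inc cont r0] unfolding closure_sequential by blast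
  have l1: "(\<lambda>n. F (\<theta>, s n)) \<longlonglongrightarrow> F (\<theta>, r0)"
    by (rule isCont_tendsto_compose[OF isc[OF r0]]) (intro tendsto_intros s(2))
  have l2: "(\<lambda>n. F (\<theta>', s n)) \<longlonglongrightarrow> F (\<theta>', r0)"
    by (rule isCont_tendsto_compose[OF isc[OF r0]]) (intro tendsto_intros s(2))
  have "(\<lambda>n. F (\<theta>, s n)) = (\<lambda>n. F (\<theta>', s n))" using gd s(1) by auto
  then show ?thesis using l1 l2 LIMSEQ_unique by metis
qed

lemma tensor1:
  fixes \<phi> :: "'a::euclidean_space \<Rightarrow> real" and k :: "'b::euclidean_space \<Rightarrow> real"
  assumes "open B" "smooth_on UNIV \<phi>" "smooth_on B k" "r \<in> B"
  shows "iterdir (map (\<lambda>v. (v, 0)) xs @ map (\<lambda>w. (0, w)) ys) (\<lambda>y. \<phi> (fst y) * k (snd y)) (\<theta>, r)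
       = iterdir xs \<phi> \<theta> * iterdir ys k r"
  using tensor[OF assms(1), of "{()}" "\<lambda>_. \<phi>" "\<lambda>_. k" r xs ys \<theta>] assms by simp

lemma smooth_tensor:
  fixes \<phi> :: "'a::euclidean_space \<Rightarrow> real" and k :: "'b::euclidean_space \<Rightarrow> real"
  assumes "open B" "smooth_on UNIV \<phi>" "smooth_on B k"
  shows "smooth_on (UNIV \<times> B) (\<lambda>y. \<phi> (fst y) * k (snd y))"
proof -
  have U: "open ((UNIV::'a set) \<times> B)" using assms(1) by (auto intro: open_Times)
  show ?thesis
    by (rule smooth_mult[OF U smooth_on_subset[OF smooth_fst[OF assms(2)]] smooth_snd[OF assms(3,1)]]) auto
qed

lemma cos_periodic_int': "cos (x + 2 * pi * of_int n) = cos x"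
  by (simp add: cos_add)

lemma partial_tensor:
  fixes \<phi> :: "(real, 'p::{finite,linorder}) vec \<Rightarrow> real" and k :: "(real, 'q::{finite,linorder}) vec \<Rightarrow> real"
  assumes "open B" "smooth_on UNIV \<phi>" "smooth_on B k" "r \<in> B"
  shows "partial_IJ I J (\<lambda>y. \<phi> (fst y) * k (snd y)) (\<theta>, r) = iterdir (adirs I) \<phi> \<theta> * iterdir (adirs J) k r"
  unfolding partial_IJ_def theta_dirs_eq r_dirs_eq by (rule tensor1[OF assms])

lemma partial_tensor_sum:
  fixes \<phi> :: "'i \<Rightarrow> (real, 'p::{finite,linorder}) vec \<Rightarrow> real" and k :: "'i \<Rightarrow> (real, 'q::{finite,linorder}) vec \<Rightarrow> real"
  assumes "open B" "finite A" "\<And>i. i \<in> A \<Longrightarrow> smooth_on UNIV (\<phi> i)" "\<And>i. i \<in> A \<Longrightarrow> smooth_on B (k i)" "r \<in> B"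
  shows "partial_IJ I J (\<lambda>y. \<Sum>i\<in>A. \<phi> i (fst y) * k i (snd y)) (\<theta>, r) = (\<Sum>i\<in>A. iterdir (adirs I) (\<phi> i) \<theta> * iterdir (adirs J) (k i) r)"
  unfolding partial_IJ_def theta_dirs_eq r_dirs_eq by (rule tensor[OF assms])

lemma dirderiv_theta_tensor:
  fixes \<phi> :: "'a::euclidean_space \<Rightarrow> real" and k :: "'b::euclidean_space \<Rightarrow> real"
  assumes "\<phi> differentiable (at \<theta>)"
  shows "dirderiv (v, 0) (\<lambda>y. \<phi> (fst y) * k (snd y)) (\<theta>, r) = dirderiv v \<phi> \<theta> * k r"
proof -
  have "dirderiv (v, 0) (\<lambda>y. \<phi> (fst y) * k (snd y)) (\<theta>, r) = deriv (\<lambda>t. \<phi> (\<theta> + t *\<^sub>R v) * k r) 0"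
    by (simp add: dirderiv_def)
  also have "\<dots> = dirderiv v \<phi> \<theta> * k r"
    by (rule DERIV_imp_deriv, rule DERIV_cmult_right, rule dd_has_real_derivative0[OF assms])
  finally show ?thesis .
qed

definition Wv :: "(real, 'p::finite) vec \<Rightarrow> ('p \<Rightarrow> nat) \<Rightarrow> real" where
  "Wv w I = (\<Prod>i\<in>UNIV. (w $ i) ^ (I i))"

definition sI :: "('p::finite \<Rightarrow> nat) \<Rightarrow> nat" where
  "sI I = (\<Sum>i\<in>UNIV. I i)"

lemma cf1:
  "iterdir (adirs I) (\<lambda>\<theta>. cos (w \<bullet> \<theta> + \<alpha>)) \<theta> = Wv w I * cos (w \<bullet> \<theta> + \<alpha> + real (sI I) * (pi / 2))"
  using iterdir_cos[of "adirs I" 1 w \<alpha>] by (simp add: prod_adirs length_adirs Wv_def sI_def)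

lemma cf2:
  "iterdir (axis i 1 # adirs I) (\<lambda>\<theta>. cos (w \<bullet> \<theta> + \<alpha>)) \<theta>
     = w $ i * Wv w I * cos (w \<bullet> \<theta> + \<alpha> + real (sI I + 1) * (pi / 2))"
  using iterdir_cos[of "axis i 1 # adirs I" 1 w \<alpha>] by (simp add: prod_adirs length_adirs Wv_def sI_def inner_axis add.commute)

lemma cf3:
  "iterdir (adirs I @ [axis i 1]) (\<lambda>\<theta>. cos (w \<bullet> \<theta> + \<alpha>)) \<theta>
     = w $ i * Wv w I * cos (w \<bullet> \<theta> + \<alpha> + real (sI I + 1) * (pi / 2))"
  using iterdir_cos[of "adirs I @ [axis i 1]" 1 w \<alpha>] by (simp add: prod_adirs length_adirs Wv_def sI_def inner_axis add.commute)

lemma key_identity: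
  fixes a :: "'p::{finite,linorder} \<Rightarrow> (real, 'q::{finite,linorder}) vec \<Rightarrow> real"
    and S :: "(('p \<Rightarrow> nat) \<times> ('q \<Rightarrow> nat)) set"
    and C :: "('p \<Rightarrow> nat) \<times> ('q \<Rightarrow> nat) \<Rightarrow> (real, 'p) vec \<times> (real, 'q) vec \<Rightarrow> real"
  assumes B: "open B" "r0 \<in> B"
    and a_sm: "\<And>i. smooth_on B (a i)"
    and S_fin: "finite S"
    and C_sm: "\<And>IJ. IJ \<in> S \<Longrightarrow> smooth_on (UNIV \<times> B) (C IJ)"
    and g_def: "g = (\<lambda>y. cos (w \<bullet> fst y + \<alpha>) * hpoly K r0 (snd y))"
    and comm: "Zop a (Lop S C g) (\<theta>, r0) = Lop S C (Zop a g) (\<theta>, r0)"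
  shows "(\<Sum>IJ\<in>S. iterdir (adirs (snd IJ)) (hpoly K r0) r0 * Zop a (C IJ) (\<theta>, r0) * Wv w (fst IJ)
            * cos (w \<bullet> \<theta> + \<alpha> + real (sI (fst IJ)) * (pi / 2)))
       = (\<Sum>IJ\<in>S. C IJ (\<theta>, r0) * Wv w (fst IJ) * cos (w \<bullet> \<theta> + \<alpha> + real (sI (fst IJ) + 1) * (pi / 2))
            * ((\<Sum>i\<in>UNIV. w $ i * iterdir (adirs (snd IJ)) (\<lambda>r. a i r * hpoly K r0 r) r0)
               - iterdir (adirs (snd IJ)) (hpoly K r0) r0 * (\<Sum>i\<in>UNIV. a i r0 * w $ i)))"
proof -
  define \<phi> where "\<phi> = (\<lambda>\<theta>::(real, 'p) vec. cos (w \<bullet> \<theta> + \<alpha>))"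
  define h where "h = hpoly K r0"
  define x where "x = (\<theta>, r0)"
  define Hv where "Hv J = iterdir (adirs J) h r0" for J
  define Pv where "Pv I = cos (w \<bullet> \<theta> + \<alpha> + real (sI I) * (pi / 2))" for I :: "'p \<Rightarrow> nat"
  define Qv where "Qv I = cos (w \<bullet> \<theta> + \<alpha> + real (sI I + 1) * (pi / 2))" for I :: "'p \<Rightarrow> nat"
  define Lv where "Lv i J = iterdir (adirs J) (\<lambda>r. a i r * h r) r0" for i J
  have U: "open ((UNIV :: (real, 'p) vec set) \<times> B)" using B(1) by (auto intro: open_Times)
  have xU: "x \<in> UNIV \<times> B" using B(2) by (simp add: x_def)
  have \<phi>sm: "smooth_on UNIV \<phi>" unfolding \<phi>_def using smooth_cos[of 1 w \<alpha>] by simp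
  have hsm: "smooth_on UNIV h" unfolding h_def by (rule smooth_hpoly)
  have g: "g = (\<lambda>y. \<phi> (fst y) * h (snd y))" by (simp add: g_def \<phi>_def h_def)
  have pg: "partial_IJ I J g y = iterdir (adirs I) \<phi> (fst y) * iterdir (adirs J) h (snd y)" for I J y
    unfolding g using partial_tensor[OF open_UNIV \<phi>sm hsm, of "snd y" I J "fst y"] by simp
  have Lg: "Lop S C g = (\<lambda>y. \<Sum>IJ\<in>S. C IJ y * (iterdir (adirs (fst IJ)) \<phi> (fst y) * iterdir (adirs (snd IJ)) h (snd y)))"
    by (simp add: Lop_def pg split_def)
  have dL: "dirderiv (axis i 1, 0) (Lop S C g) x
      = (\<Sum>IJ\<in>S. dirderiv (axis i 1, 0) (C IJ) x * (Wv w (fst IJ) * Pv (fst IJ) * Hv (snd IJ))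
                 + C IJ x * (w $ i * Wv w (fst IJ) * Qv (fst IJ) * Hv (snd IJ)))" for i
  proof -
    have ten_sm: "smooth_on (UNIV \<times> UNIV) (\<lambda>y. iterdir (adirs I) \<phi> (fst y) * iterdir (adirs J) h (snd y))" for I J
      by (rule smooth_tensor[OF open_UNIV smooth_iterdir[OF \<phi>sm] smooth_iterdir[OF hsm]])
    have ten_d: "(\<lambda>y. iterdir (adirs I) \<phi> (fst y) * iterdir (adirs J) h (snd y)) differentiable (at x)" for I J
      using smooth_differentiable[OF ten_sm] by simp
    have C_d: "C IJ differentiable (at x)" if "IJ \<in> S" for IJ
      using smooth_differentiable[OF C_sm[OF that] U xU] .
    have "dirderiv (axis i 1, 0) (Lop S C g) x
        = (\<Sum>IJ\<in>S. dirderiv (axis i 1, 0) (\<lambda>y. C IJ y * (iterdir (adirs (fst IJ)) \<phi> (fst y) * iterdir (adirs (snd IJ)) h (snd y))) x)"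
      unfolding Lg by (rule dirderiv_sum[OF S_fin]) (intro differentiable_mult C_d ten_d)
    also have "\<dots> = (\<Sum>IJ\<in>S. dirderiv (axis i 1, 0) (C IJ) x * (Wv w (fst IJ) * Pv (fst IJ) * Hv (snd IJ))
                 + C IJ x * (w $ i * Wv w (fst IJ) * Qv (fst IJ) * Hv (snd IJ)))"
    proof (rule sum.cong[OF refl])
      fix IJ assume IJ: "IJ \<in> S"
      have "dirderiv (axis i 1, 0) (\<lambda>y. C IJ y * (iterdir (adirs (fst IJ)) \<phi> (fst y) * iterdir (adirs (snd IJ)) h (snd y))) x
          = dirderiv (axis i 1, 0) (C IJ) x * (iterdir (adirs (fst IJ)) \<phi> \<theta> * iterdir (adirs (snd IJ)) h r0)
            + C IJ x * dirderiv (axis i 1, 0) (\<lambda>y. iterdir (adirs (fst IJ)) \<phi> (fst y) * iterdir (adirs (snd IJ)) h (snd y)) x"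
        by (rule trans[OF dirderiv_mult[OF C_d[OF IJ] ten_d]]) (simp add: x_def)
      also have "dirderiv (axis i 1, 0) (\<lambda>y. iterdir (adirs (fst IJ)) \<phi> (fst y) * iterdir (adirs (snd IJ)) h (snd y)) x
          = dirderiv (axis i 1) (iterdir (adirs (fst IJ)) \<phi>) \<theta> * iterdir (adirs (snd IJ)) h r0"
        unfolding x_def by (rule dirderiv_theta_tensor[OF smooth_differentiable[OF smooth_iterdir[OF \<phi>sm] open_UNIV]]) simp
      finally show "dirderiv (axis i 1, 0) (\<lambda>y. C IJ y * (iterdir (adirs (fst IJ)) \<phi> (fst y) * iterdir (adirs (snd IJ)) h (snd y))) x
          = dirderiv (axis i 1, 0) (C IJ) x * (Wv w (fst IJ) * Pv (fst IJ) * Hv (snd IJ))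
                 + C IJ x * (w $ i * Wv w (fst IJ) * Qv (fst IJ) * Hv (snd IJ))"
        using cf1[of "fst IJ" w \<alpha> \<theta>] cf2[of i "fst IJ" w \<alpha> \<theta>]
        by (simp add: \<phi>_def Hv_def Pv_def Qv_def mult_ac)
    qed
    finally show ?thesis .
  qed
  have LHS: "Zop a (Lop S C g) x
      = (\<Sum>IJ\<in>S. Hv (snd IJ) * Zop a (C IJ) x * Wv w (fst IJ) * Pv (fst IJ))
        + (\<Sum>IJ\<in>S. C IJ x * Wv w (fst IJ) * Qv (fst IJ) * Hv (snd IJ) * (\<Sum>i\<in>UNIV. a i r0 * w $ i))"
  proof -
    have "Zop a (Lop S C g) x = (\<Sum>i\<in>UNIV. a i r0 * dirderiv (axis i 1, 0) (Lop S C g) x)"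
      by (simp add: Zop_def x_def)
    also have "\<dots> = (\<Sum>i\<in>UNIV. \<Sum>IJ\<in>S. a i r0 * dirderiv (axis i 1, 0) (C IJ) x * (Wv w (fst IJ) * Pv (fst IJ) * Hv (snd IJ))
                 + C IJ x * Wv w (fst IJ) * Qv (fst IJ) * Hv (snd IJ) * (a i r0 * w $ i))"
      by (simp add: dL sum_distrib_left algebra_simps)
    also have "\<dots> = (\<Sum>IJ\<in>S. \<Sum>i\<in>UNIV. a i r0 * dirderiv (axis i 1, 0) (C IJ) x * (Wv w (fst IJ) * Pv (fst IJ) * Hv (snd IJ))
                 + C IJ x * Wv w (fst IJ) * Qv (fst IJ) * Hv (snd IJ) * (a i r0 * w $ i))"
      by (rule sum.swap)
    also have "\<dots> = (\<Sum>IJ\<in>S. Hv (snd IJ) * Zop a (C IJ) x * Wv w (fst IJ) * Pv (fst IJ)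
                 + C IJ x * Wv w (fst IJ) * Qv (fst IJ) * Hv (snd IJ) * (\<Sum>i\<in>UNIV. a i r0 * w $ i))"
      by (simp add: sum.distrib Zop_def x_def sum_distrib_left sum_distrib_right mult_ac)
    finally show ?thesis by (simp add: sum.distrib)
  qed
  have dg: "dirderiv (axis i 1, 0) g y = dirderiv (axis i 1) \<phi> (fst y) * h (snd y)" for i y
    unfolding g using dirderiv_theta_tensor[OF smooth_differentiable[OF \<phi>sm open_UNIV], of "fst y" "axis i 1" h "snd y"]
    by simp
  have Zg: "Zop a g = (\<lambda>y. \<Sum>i\<in>UNIV. dirderiv (axis i 1) \<phi> (fst y) * (a i (snd y) * h (snd y)))"
    by (auto simp: Zop_def dg mult_ac intro!: ext)
  have pZ: "partial_IJ I J (Zop a g) x = (\<Sum>i\<in>UNIV. w $ i * Wv w I * Qv I * Lv i J)" for I J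
  proof -
    have "partial_IJ I J (Zop a g) x = (\<Sum>i\<in>UNIV. iterdir (adirs I) (dirderiv (axis i 1) \<phi>) \<theta> * iterdir (adirs J) (\<lambda>r. a i r * h r) r0)"
      unfolding Zg x_def
    proof (rule partial_tensor_sum[OF B(1) finite _ _ B(2)])
      show "smooth_on UNIV (dirderiv (axis i 1) \<phi>)" for i
        using smooth_iterdir[OF \<phi>sm, of "[axis i 1]"] by simp
      show "smooth_on B (\<lambda>r. a i r * h r)" for i
        by (rule smooth_mult[OF B(1) a_sm smooth_on_subset[OF hsm]]) simp
    qed
    also have "\<dots> = (\<Sum>i\<in>UNIV. w $ i * Wv w I * Qv I * Lv i J)"
    proof (rule sum.cong[OF refl])
      fix i
      have "iterdir (adirs I) (dirderiv (axis i 1) \<phi>) \<theta> = iterdir (adirs I @ [axis i 1]) \<phi> \<theta>"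
        by (simp add: iterdir_append)
      then show "iterdir (adirs I) (dirderiv (axis i 1) \<phi>) \<theta> * iterdir (adirs J) (\<lambda>r. a i r * h r) r0
          = w $ i * Wv w I * Qv I * Lv i J"
        using cf3[of I i w \<alpha> \<theta>] by (simp add: \<phi>_def Qv_def Lv_def)
    qed
    finally show ?thesis .
  qed
  have RHS: "Lop S C (Zop a g) x = (\<Sum>IJ\<in>S. C IJ x * Wv w (fst IJ) * Qv (fst IJ) * (\<Sum>i\<in>UNIV. w $ i * Lv i (snd IJ)))"
    by (simp add: Lop_def split_def pZ sum_distrib_left mult_ac)
  have "(\<Sum>IJ\<in>S. Hv (snd IJ) * Zop a (C IJ) x * Wv w (fst IJ) * Pv (fst IJ))
      = (\<Sum>IJ\<in>S. C IJ x * Wv w (fst IJ) * Qv (fst IJ) * (\<Sum>i\<in>UNIV. w $ i * Lv i (snd IJ)))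
        - (\<Sum>IJ\<in>S. C IJ x * Wv w (fst IJ) * Qv (fst IJ) * Hv (snd IJ) * (\<Sum>i\<in>UNIV. a i r0 * w $ i))"
    using comm LHS RHS unfolding x_def by linarith
  also have "\<dots> = (\<Sum>IJ\<in>S. C IJ x * Wv w (fst IJ) * Qv (fst IJ)
            * ((\<Sum>i\<in>UNIV. w $ i * Lv i (snd IJ)) - Hv (snd IJ) * (\<Sum>i\<in>UNIV. a i r0 * w $ i)))"
    by (simp add: sum_subtractf[symmetric] algebra_simps)
  finally show ?thesis by (simp add: x_def Hv_def Pv_def Qv_def Lv_def h_def)
qed

lemma step_lemma:
  fixes a :: "'p::{finite,linorder} \<Rightarrow> (real, 'q::{finite,linorder}) vec \<Rightarrow> real"
    and c :: "(real, 'q) vec" and \<rho> :: real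
    and S :: "(('p \<Rightarrow> nat) \<times> ('q \<Rightarrow> nat)) set"
    and C :: "('p \<Rightarrow> nat) \<times> ('q \<Rightarrow> nat) \<Rightarrow> (real, 'p) vec \<times> (real, 'q) vec \<Rightarrow> real"
  assumes a_smooth: "\<And>i. smooth_on (ball c \<rho>) (a i)"
    and S_fin: "finite S"
    and C_smooth: "\<And>IJ. IJ \<in> S \<Longrightarrow> smooth_on (UNIV \<times> ball c \<rho>) (C IJ)"
    and C_per: "\<And>IJ. IJ \<in> S \<Longrightarrow> theta_periodic (C IJ)"
    and commute: "\<And>g. smooth_on (UNIV \<times> ball c \<rho>) g \<Longrightarrow> theta_periodic g \<Longrightarrow>
        \<forall>x \<in> UNIV \<times> ball c \<rho>. Zop a (Lop S C g) x = Lop S C (Zop a g) x"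
    and IH: "\<And>I J. (I, J) \<in> S \<Longrightarrow> (\<forall>j. K j \<le> J j) \<Longrightarrow> J \<noteq> K \<Longrightarrow>
        \<forall>\<theta> \<theta>' r. r \<in> ball c \<rho> \<longrightarrow> C (I, J) (\<theta>, r) = C (I, J) (\<theta>', r)"
    and IK: "(I0, K) \<in> S" and r0: "r0 \<in> ball c \<rho>"
  shows "Zop a (C (I0, K)) (\<theta>0, r0) = 0"
proof -
  define B where "B = ball c \<rho>"
  have Bo: "open B" by (simp add: B_def)
  have r0B: "r0 \<in> B" using r0 by (simp add: B_def)
  have U: "open ((UNIV :: (real, 'p) vec set) \<times> B)" using Bo by (auto intro: open_Times)
  define FK where "FK = (\<Prod>j\<in>UNIV. fact (K j) :: real)"
  have FK: "FK \<noteq> 0" by (simp add: FK_def)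
  define E where "E \<theta> IJ = Zop a (C IJ) (\<theta>, r0)" for \<theta> IJ
  define SK where "SK = {IJ \<in> S. snd IJ = K}"
  have SKfin: "finite SK" using S_fin by (simp add: SK_def)
  have injSK: "inj_on fst SK" by (auto simp: SK_def inj_on_def prod_eq_iff)
  define Hv where "Hv J = iterdir (adirs J) (hpoly K r0) r0" for J
  have Hv: "Hv J = (if J = K then FK else 0)" for J by (simp add: Hv_def hpoly_eval FK_def)
  define Lv where "Lv i J = iterdir (adirs J) (\<lambda>r. a i r * hpoly K r0 r) r0" for i J
  define X where "X w IJ = (\<Sum>i\<in>UNIV. w $ i * Lv i (snd IJ)) - Hv (snd IJ) * (\<Sum>i\<in>UNIV. a i r0 * w $ i)"
    for w :: "(real, 'p) vec" and IJ :: "('p \<Rightarrow> nat) \<times> ('q \<Rightarrow> nat)"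
  have KI: "(\<Sum>IJ\<in>S. Hv (snd IJ) * E \<theta> IJ * Wv w (fst IJ) * cos (w \<bullet> \<theta> + \<alpha> + real (sI (fst IJ)) * (pi / 2)))
       = (\<Sum>IJ\<in>S. C IJ (\<theta>, r0) * Wv w (fst IJ) * cos (w \<bullet> \<theta> + \<alpha> + real (sI (fst IJ) + 1) * (pi / 2)) * X w IJ)"
    if w: "w = (\<chi> i. 2 * pi * real_of_int (m i))" for w m \<alpha> \<theta>
  proof -
    define g where "g = (\<lambda>y::(real, 'p) vec \<times> (real, 'q) vec. cos (w \<bullet> fst y + \<alpha>) * hpoly K r0 (snd y))"
    have gsm: "smooth_on (UNIV \<times> ball c \<rho>) g"
      unfolding g_def using smooth_tensor[OF open_ball smooth_cos[of 1 w \<alpha>] smooth_on_subset[OF smooth_hpoly[of K r0]]]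
      by simp
    have gper: "theta_periodic g"
      unfolding theta_periodic_def g_def
    proof (intro allI)
      fix i \<theta>' r
      have "w \<bullet> (\<theta>' + axis i 1) + \<alpha> = (w \<bullet> \<theta>' + \<alpha>) + 2 * pi * real_of_int (m i)"
        by (simp add: inner_add_right inner_axis w)
      then show "cos (w \<bullet> fst (\<theta>' + axis i 1, r) + \<alpha>) * hpoly K r0 (snd (\<theta>' + axis i 1, r))
           = cos (w \<bullet> fst (\<theta>', r) + \<alpha>) * hpoly K r0 (snd (\<theta>', r))"
        by (simp only: fst_conv snd_conv cos_periodic_int')
    qed
    have cm: "Zop a (Lop S C g) (\<theta>, r0) = Lop S C (Zop a g) (\<theta>, r0)"
      using commute[OF gsm gper] r0 by blast
    show ?thesis
      using key_identity[OF Bo r0B a_smooth[folded B_def] S_fin C_smooth[folded B_def] g_def cm]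
      by (simp add: E_def Hv_def Lv_def X_def)
  qed
  \<comment> \<open>the right-hand side does not depend on theta after shifting alpha\<close>
  have CX: "C IJ (\<theta>, r0) * X w IJ = C IJ (0, r0) * X w IJ" if IJ: "IJ \<in> S" for IJ \<theta> w
  proof (cases "snd IJ = K")
    case True
    have "Lv i (snd IJ) = a i r0 * FK" for i
      unfolding Lv_def True FK_def by (rule leib_eval_eq[OF Bo r0B a_smooth[folded B_def]])
    then have "X w IJ = 0" using True by (simp add: X_def Hv sum_distrib_left mult_ac)
    then show ?thesis by simp
  next
    case False
    show ?thesis
    proof (cases "\<forall>j. K j \<le> snd IJ j")
      case True
      then show ?thesis using IH[of "fst IJ" "snd IJ"] IJ False r0 by auto
    next
      case nle: False
      then obtain j where j: "snd IJ j < K j" by (auto simp: not_le)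
      have "Lv i (snd IJ) = 0" for i
        unfolding Lv_def by (rule leib_eval_less[OF Bo r0B a_smooth[folded B_def], where J="snd IJ" and j=j and K=K, OF j])
      then have "X w IJ = 0" using False by (simp add: X_def Hv)
      then show ?thesis by simp
    qed
  qed
  have inv: "(\<Sum>IJ\<in>SK. FK * (E \<theta> IJ - E 0 IJ) * Wv w (fst IJ) * cos (\<beta> + real (sI (fst IJ)) * (pi / 2))) = 0"
    if w: "w = (\<chi> i. 2 * pi * real_of_int (m i))" for w m \<beta> \<theta>
  proof -
    have R: "(\<Sum>IJ\<in>S. C IJ (\<theta>, r0) * Wv w (fst IJ) * cos (w \<bullet> \<theta> + (\<beta> - w \<bullet> \<theta>) + real (sI (fst IJ) + 1) * (pi / 2)) * X w IJ)
        = (\<Sum>IJ\<in>S. C IJ (0, r0) * Wv w (fst IJ) * cos (w \<bullet> 0 + \<beta> + real (sI (fst IJ) + 1) * (pi / 2)) * X w IJ)"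
    proof (rule sum.cong[OF refl])
      fix IJ assume "IJ \<in> S"
      then show "C IJ (\<theta>, r0) * Wv w (fst IJ) * cos (w \<bullet> \<theta> + (\<beta> - w \<bullet> \<theta>) + real (sI (fst IJ) + 1) * (pi / 2)) * X w IJ
          = C IJ (0, r0) * Wv w (fst IJ) * cos (w \<bullet> 0 + \<beta> + real (sI (fst IJ) + 1) * (pi / 2)) * X w IJ"
        using CX[of IJ \<theta> w] by (auto simp: mult_ac)
    qed
    have L: "(\<Sum>IJ\<in>S. Hv (snd IJ) * E \<theta> IJ * Wv w (fst IJ) * cos (\<beta> + real (sI (fst IJ)) * (pi / 2)))
        = (\<Sum>IJ\<in>S. Hv (snd IJ) * E 0 IJ * Wv w (fst IJ) * cos (\<beta> + real (sI (fst IJ)) * (pi / 2)))"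
      using KI[OF w, where \<alpha>="\<beta> - w \<bullet> \<theta>" and \<theta>=\<theta>] KI[OF w, where \<alpha>=\<beta> and \<theta>=0] R by simp
    have "(\<Sum>IJ\<in>S. Hv (snd IJ) * (E \<theta> IJ - E 0 IJ) * Wv w (fst IJ) * cos (\<beta> + real (sI (fst IJ)) * (pi / 2))) = 0"
      using L by (simp add: algebra_simps sum_subtractf)
    moreover have "(\<Sum>IJ\<in>S. Hv (snd IJ) * (E \<theta> IJ - E 0 IJ) * Wv w (fst IJ) * cos (\<beta> + real (sI (fst IJ)) * (pi / 2)))
        = (\<Sum>IJ\<in>SK. FK * (E \<theta> IJ - E 0 IJ) * Wv w (fst IJ) * cos (\<beta> + real (sI (fst IJ)) * (pi / 2)))"
      unfolding SK_def by (subst sum.inter_filter[OF S_fin]) (auto simp: Hv intro!: sum.cong)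
    ultimately show ?thesis by simp
  qed
  have Econst: "E \<theta> (I0, K) = E 0 (I0, K)" for \<theta>
  proof -
    define d where "d I = FK * (E \<theta> (I, K) - E 0 (I, K))" for I
    have "d I0 = 0"
    proof (rule trig_extract[where F = "fst ` SK"])
      show "finite (fst ` SK)" using SKfin by simp
      show "I0 \<in> fst ` SK" using IK by (force simp: SK_def)
      fix m :: "'p \<Rightarrow> int" and \<beta>
      define w where "w = (\<chi> i. 2 * pi * real_of_int (m i))"
      have W: "Wv w I = (\<Prod>i\<in>UNIV. (2 * pi * real_of_int (m i)) ^ I i)" for I
        by (simp add: Wv_def w_def)
      have "(\<Sum>I\<in>fst ` SK. d I * (\<Prod>i\<in>UNIV. (2 * pi * real_of_int (m i)) ^ I i) * cos (\<beta> + real (\<Sum>i\<in>UNIV. I i) * (pi / 2)))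
          = (\<Sum>IJ\<in>SK. d (fst IJ) * Wv w (fst IJ) * cos (\<beta> + real (sI (fst IJ)) * (pi / 2)))"
        by (subst sum.reindex[OF injSK]) (simp add: W sI_def)
      also have "\<dots> = (\<Sum>IJ\<in>SK. FK * (E \<theta> IJ - E 0 IJ) * Wv w (fst IJ) * cos (\<beta> + real (sI (fst IJ)) * (pi / 2)))"
        by (rule sum.cong[OF refl]) (auto simp: SK_def d_def)
      also have "\<dots> = 0" by (rule inv[OF w_def])
      finally show "(\<Sum>I\<in>fst ` SK. d I * (\<Prod>i\<in>UNIV. (2 * pi * real_of_int (m i)) ^ I i) * cos (\<beta> + real (\<Sum>i\<in>UNIV. I i) * (pi / 2))) = 0" .
    qed
    then show ?thesis using FK by (simp add: d_def)
  qed
  have diff: "C (I0, K) differentiable (at (\<theta>, r0))" for \<theta>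
    using smooth_differentiable[OF C_smooth[OF IK] open_Times[OF open_UNIV open_ball]] r0 by simp
  have "E 0 (I0, K) = 0"
    by (rule flow_const(1)[OF diff C_per[OF IK]]) (use Econst in \<open>simp add: E_def\<close>)
  then show ?thesis using Econst[of \<theta>0] by (simp add: E_def)
qed

theorem mainTheorem10:
  fixes a :: "'p::{finite,linorder} \<Rightarrow> (real, 'q::{finite,linorder}) vec \<Rightarrow> real"
    and c :: "(real, 'q) vec" and \<rho> :: real
    and S :: "(('p \<Rightarrow> nat) \<times> ('q \<Rightarrow> nat)) set"
    and C :: "('p \<Rightarrow> nat) \<times> ('q \<Rightarrow> nat) \<Rightarrow> (real, 'p) vec \<times> (real, 'q) vec \<Rightarrow> real"
  assumes rho: "\<rho> > 0"
    and a_smooth: "\<And>i. smooth_on (ball c \<rho>) (a i)"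
    and incomm: "incommensurable a (ball c \<rho>)"
    and S_fin: "finite S"
    and C_smooth: "\<And>IJ. IJ \<in> S \<Longrightarrow> smooth_on (UNIV \<times> ball c \<rho>) (C IJ)"
    and C_per: "\<And>IJ. IJ \<in> S \<Longrightarrow> theta_periodic (C IJ)"
    and commute: "\<And>g. smooth_on (UNIV \<times> ball c \<rho>) g \<Longrightarrow> theta_periodic g \<Longrightarrow>
        \<forall>x \<in> UNIV \<times> ball c \<rho>. Zop a (Lop S C g) x = Lop S C (Zop a g) x"
  shows "\<forall>IJ \<in> S. \<forall>\<theta> \<theta>' r. r \<in> ball c \<rho> \<longrightarrow> C IJ (\<theta>, r) = C IJ (\<theta>', r)"
proof -
  define P where "P K = (\<forall>I. (I, K) \<in> S \<longrightarrow> (\<forall>\<theta> \<theta>' r. r \<in> ball c \<rho> \<longrightarrow> C (I, K) (\<theta>, r) = C (I, K) (\<theta>', r)))"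
    for K
  define Mx where "Mx = Max (insert 0 ((\<lambda>IJ. sI (snd IJ)) ` S))"
  have Mx: "sI J \<le> Mx" if "(I, J) \<in> S" for I J
    unfolding Mx_def using S_fin that by (intro Max_ge) force+
  have acont: "continuous_on (ball c \<rho>) (a i)" for i
    using a_smooth[of i] unfolding smooth_on_def
    by (metis differentiable_imp_continuous_on iterdir.simps(1))
  have "P K" for K
  proof (induction K rule: measure_induct_rule[where f = "\<lambda>K. Mx - sI K"])
    case (less K)
    show ?case unfolding P_def
    proof (intro allI impI)
      fix I \<theta> \<theta>' r assume IK: "(I, K) \<in> S" and r: "r \<in> ball c \<rho>"
      have IH: "\<forall>\<theta> \<theta>' r. r \<in> ball c \<rho> \<longrightarrow> C (I', J) (\<theta>, r) = C (I', J) (\<theta>', r)"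
        if IJ: "(I', J) \<in> S" and le: "\<forall>j. K j \<le> J j" and ne: "J \<noteq> K" for I' J
      proof -
        obtain j where "K j \<noteq> J j" using ne by (metis ext)
        then have "K j < J j" using le by (metis le_neq_implies_less)
        then have "sI K < sI J" unfolding sI_def using le by (intro sum_strict_mono_ex1) auto
        moreover have "sI J \<le> Mx" using Mx[OF IJ] .
        ultimately have "Mx - sI J < Mx - sI K" by linarith
        then have "P J" by (rule less.IH)
        then show ?thesis using IJ unfolding P_def by blast
      qed
      have Z: "Zop a (C (I, K)) (\<theta>0, r0) = 0" if "r0 \<in> ball c \<rho>" for \<theta>0 r0
        by (rule step_lemma[OF a_smooth S_fin C_smooth C_per commute IH IK that]) auto
      show "C (I, K) (\<theta>, r) = C (I, K) (\<theta>', r)"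
      proof (rule indep_final[OF incomm acont _ C_per[OF IK] Z r])
        fix \<theta>1 r1 assume "r1 \<in> ball c \<rho>"
        then show "C (I, K) differentiable (at (\<theta>1, r1))"
          using smooth_differentiable[OF C_smooth[OF IK] open_Times[OF open_UNIV open_ball]] by simp
      qed
    qed
  qed
  then show ?thesis unfolding P_def by auto
qed

end
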